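(* Let $\phi_{C}(t)=\frac{1}{\cosh t}$, $\phi_{S}(t)=\frac{t}{\sinh t}$ and $\phi_{T}(t)=\frac{\tanh t}{t}$, $t\in\mathbb{R}$; these are selfdecomposable characteristic functions. Their background driving characteristic functions $\psi_C,\psi_S,\psi_T$ (i.e. the characteristic functions of $Y(1)$, where $Y$ is the background driving L\'evy process of the corresponding law) are \[ \psi_{C}(t)=\exp[-t\tanh t],\qquad \psi_{S}(t)=\exp[1-t\coth t],\qquad \psi_{T}(t)=\exp\Big[\frac{1}{\cosh t}\cdot\frac{t}{\sinh t}-1\Big]=\exp\Big[\frac{2t}{\sinh(2t)}-1\Big], \] and they satisfy $\psi_C(t)=\psi_S(t)\,\psi_T(t)$. The probability distributions corresponding to $\psi_C$, $\psi_S$ and $\psi_T$ are infinitely divisible and have finite logarithmic moments.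
   Context: A characteristic function $\phi$ is selfdecomposable ($\phi\in SD$) if for every $0<c<1$ there is a characteristic function $\rho_c$ with $\phi(t)=\phi(ct)\rho_c(t)$ for all real $t$. A random variable $X$ has a selfdecomposable law iff there exists a unique L\'evy process $(Y(s))_{s\ge0}$, called the background driving L\'evy process (BDLP) of $X$, such that $X\overset{d}{=}\int_0^\infty e^{-s}\,dY(s)$. If $\phi$ is the characteristic function of $X$ and $\psi$ that of $Y(1)$, then $\log\phi(t)=\int_0^t \log\psi(v)\,\frac{dv}{v}$, i.e. $\psi(t)=\exp[t(\log\phi(t))']$ for $t\neq0$, $\psi(0)=1$; $\psi$ is called the background driving characteristic function of $\phi$. A distribution has finite logarithmic moment if $\mathbb{E}[\log(1+|Y(1)|)]<\infty$. *)

theory Defs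
  imports "HOL-Probability.Probability"
begin

definition is_char_fun :: "(real \<Rightarrow> complex) \<Rightarrow> bool" where
  "is_char_fun f \<longleftrightarrow> (\<exists>M. real_distribution M \<and> f = char M)"

definition selfdecomposable :: "(real \<Rightarrow> complex) \<Rightarrow> bool" where
  "selfdecomposable \<phi> \<longleftrightarrow> is_char_fun \<phi> \<and>
     (\<forall>c::real. 0 < c \<and> c < 1 \<longrightarrow>
        (\<exists>\<rho>. is_char_fun \<rho> \<and> (\<forall>t. \<phi> t = \<phi> (c * t) * \<rho> t)))"

fun conv_pow :: "real measure \<Rightarrow> nat \<Rightarrow> real measure" where
  "conv_pow N 0 = return borel 0"
| "conv_pow N (Suc n) = convolution N (conv_pow N n)"

definition infinitely_divisible :: "real measure \<Rightarrow> bool" where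
  "infinitely_divisible M \<longleftrightarrow> real_distribution M \<and>
     (\<forall>n::nat. n \<ge> 1 \<longrightarrow> (\<exists>N. real_distribution N \<and> M = conv_pow N n))"

definition finite_log_moment :: "real measure \<Rightarrow> bool" where
  "finite_log_moment M \<longleftrightarrow> integrable M (\<lambda>x. ln (1 + \<bar>x\<bar>))"

text \<open>Background driving characteristic function of a positive real-valued characteristic
  function: psi(t) = exp(t (log phi)'(t)) for t \<noteq> 0, psi(0) = 1.\<close>
definition bdcf :: "(real \<Rightarrow> real) \<Rightarrow> real \<Rightarrow> real" where
  "bdcf \<phi> t = (if t = 0 then 1 else exp (t * deriv (\<lambda>s. ln (\<phi> s)) t))"

definition phi_C :: "real \<Rightarrow> real" where
  "phi_C t = 1 / cosh t"

definition phi_S :: "real \<Rightarrow> real" where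
  "phi_S t = (if t = 0 then 1 else t / sinh t)"

definition phi_T :: "real \<Rightarrow> real" where
  "phi_T t = (if t = 0 then 1 else tanh t / t)"

end

theory Submission
  imports Defs
begin

definition good :: "(real \<Rightarrow> real) \<Rightarrow> real \<Rightarrow> bool" where
  "good f B \<longleftrightarrow> (\<exists>M. real_distribution M \<and> char M = (\<lambda>t. complex_of_real (f t))
      \<and> integrable M (\<lambda>x. x\<^sup>2) \<and> (\<integral>x. x\<^sup>2 \<partial>M) \<le> B)"

lemma char_neg:
  assumes "real_distribution M"
  shows "char M (-t) = cnj (char M t)"
proof -
  have "char M (-t) = (CLINT x|M. cnj (iexp (t * x)))"
    unfolding char_def by (intro Bochner_Integration.integral_cong) (auto simp: exp_cnj)
  also have "\<dots> = cnj (char M t)" unfolding char_def by simp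
  finally show ?thesis .
qed

lemma real_char_mean_zero:
  assumes M: "real_distribution M" and ch: "char M = (\<lambda>t. complex_of_real (f t))"
    and int: "integrable M (\<lambda>x. x\<^sup>2)"
  shows "integrable M (\<lambda>x. x)" "(\<integral>x. x \<partial>M) = 0"
proof -
  interpret real_distribution M by fact
  show int1: "integrable M (\<lambda>x. x)"
    by (rule square_integrable_imp_integrable[OF _ int]) simp
  let ?M' = "distr M borel uminus"
  have rd: "real_distribution ?M'" by (intro real_distribution_distr) simp
  have "char ?M' t = char M t" for t
  proof -
    have "char ?M' t = char M (-t)"
      unfolding char_def by (subst integral_distr) auto
    also have "\<dots> = cnj (char M t)" by (rule char_neg[OF M])
    also have "\<dots> = char M t" using ch by simp
    finally show ?thesis .
  qed
  then have eq: "?M' = M" using Levy_uniqueness[OF rd M] by auto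
  have "(\<integral>x. x \<partial>M) = (\<integral>x. x \<partial>?M')" by (simp add: eq)
  also have "\<dots> = (\<integral>x. - x \<partial>M)" by (subst integral_distr) auto
  also have "\<dots> = - (\<integral>x. x \<partial>M)" by simp
  finally show "(\<integral>x. x \<partial>M) = 0" by simp
qed

lemma conv_facts:
  assumes M: "real_distribution M" and N: "real_distribution N"
  shows "real_distribution (M \<star> N)" "\<And>t. char (M \<star> N) t = char M t * char N t"
    and "integrable M (\<lambda>x. x\<^sup>2) \<Longrightarrow> integrable N (\<lambda>x. x\<^sup>2) \<Longrightarrow> (\<integral>x. x \<partial>M) = 0 \<Longrightarrow>
      integrable (M \<star> N) (\<lambda>x. x\<^sup>2) \<and> (\<integral>x. x\<^sup>2 \<partial>(M \<star> N)) = (\<integral>x. x\<^sup>2 \<partial>M) + (\<integral>x. x\<^sup>2 \<partial>N)"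
proof -
  interpret M: real_distribution M by fact
  interpret N: real_distribution N by fact
  interpret P: pair_prob_space M N ..
  let ?P = "M \<Otimes>\<^sub>M N"
  have sM[measurable_cong]: "sets M = sets borel" and sN[measurable_cong]: "sets N = sets borel" by auto
  have fm[measurable]: "fst \<in> measurable ?P borel" "snd \<in> measurable ?P borel"
    by (auto simp: measurable_cong_sets[OF refl sM, symmetric] measurable_cong_sets[OF refl sN, symmetric])
  have dfst: "distr ?P borel fst = M"
  proof -
    have "distr ?P borel fst = distr ?P M fst" by (rule distr_cong) (auto simp: sM)
    then show ?thesis using N.distr_pair_fst by simp
  qed
  have dsnd: "distr ?P borel snd = N"
  proof -
    interpret Q: pair_prob_space N M ..
    have "distr ?P borel snd = distr ?P N snd" by (rule distr_cong) (auto simp: sN)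
    also have "\<dots> = distr (distr (N \<Otimes>\<^sub>M M) (M \<Otimes>\<^sub>M N) (\<lambda>(x,y). (y,x))) N snd"
      using P.distr_pair_swap by simp
    also have "\<dots> = distr (N \<Otimes>\<^sub>M M) N fst"
      by (subst distr_distr) (auto intro!: distr_cong simp: comp_def split_beta)
    also have "\<dots> = N" by (rule M.distr_pair_fst)
    finally show ?thesis .
  qed
  have ind: "P.indep_var borel fst borel snd"
  proof (subst P.indep_var_distribution_eq, intro conjI)
    show "distr ?P borel fst \<Otimes>\<^sub>M distr ?P borel snd = distr ?P (borel \<Otimes>\<^sub>M borel) (\<lambda>x. (fst x, snd x))"
      unfolding dfst dsnd
      by (simp add: distr_id2 sets_pair_measure_cong[OF sM sN])
  qed (use fm in auto)
  have conv: "M \<star> N = distr ?P borel (\<lambda>\<omega>. fst \<omega> + snd \<omega>)"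
    unfolding convolution_def by (intro distr_cong) (auto simp: split_beta)
  show "real_distribution (M \<star> N)" unfolding conv by (rule P.real_distribution_distr) simp
  show "char (M \<star> N) t = char M t * char N t" for t
    unfolding conv using P.char_distr_add[OF ind, of t] by (simp add: dfst dsnd)
  assume i1: "integrable M (\<lambda>x. x\<^sup>2)" and i2: "integrable N (\<lambda>x. x\<^sup>2)" and m0: "(\<integral>x. x \<partial>M) = 0"
  have j1: "integrable M (\<lambda>x. x)" by (rule M.square_integrable_imp_integrable[OF _ i1]) simp
  have j2: "integrable N (\<lambda>x. x)" by (rule N.square_integrable_imp_integrable[OF _ i2]) simp
  have k1: "integrable ?P (\<lambda>\<omega>. (fst \<omega>)\<^sup>2)" using i1
    by (subst (asm) dfst[symmetric]) (simp add: integrable_distr_eq)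
  have k2: "integrable ?P (\<lambda>\<omega>. (snd \<omega>)\<^sup>2)" using i2
    by (subst (asm) dsnd[symmetric]) (simp add: integrable_distr_eq)
  have l1: "integrable ?P fst" using j1
    by (subst (asm) dfst[symmetric]) (simp add: integrable_distr_eq)
  have l2: "integrable ?P snd" using j2
    by (subst (asm) dsnd[symmetric]) (simp add: integrable_distr_eq)
  have k3: "integrable ?P (\<lambda>\<omega>. fst \<omega> * snd \<omega>)"
    by (rule P.indep_var_integrable[OF ind l1 l2])
  have e3: "(\<integral>\<omega>. fst \<omega> * snd \<omega> \<partial>?P) = (\<integral>\<omega>. fst \<omega> \<partial>?P) * (\<integral>\<omega>. snd \<omega> \<partial>?P)"
    by (rule P.indep_var_lebesgue_integral[OF ind l1 l2])
  have e0: "(\<integral>\<omega>. fst \<omega> \<partial>?P) = (\<integral>x. x \<partial>M)"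
    by (subst dfst[symmetric]) (simp add: integral_distr)
  have e1: "(\<integral>\<omega>. (fst \<omega>)\<^sup>2 \<partial>?P) = (\<integral>x. x\<^sup>2 \<partial>M)"
    by (subst dfst[symmetric]) (simp add: integral_distr)
  have e2: "(\<integral>\<omega>. (snd \<omega>)\<^sup>2 \<partial>?P) = (\<integral>x. x\<^sup>2 \<partial>N)"
    by (subst dsnd[symmetric]) (simp add: integral_distr)
  have sq: "(\<lambda>\<omega>::real\<times>real. (fst \<omega> + snd \<omega>)\<^sup>2) = (\<lambda>\<omega>. (fst \<omega>)\<^sup>2 + 2 * (fst \<omega> * snd \<omega>) + (snd \<omega>)\<^sup>2)"
    by (auto simp: power2_eq_square algebra_simps)
  have "integrable ?P (\<lambda>\<omega>. (fst \<omega> + snd \<omega>)\<^sup>2)" unfolding sq using k1 k2 k3 by auto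
  then show "integrable (M \<star> N) (\<lambda>x. x\<^sup>2) \<and> (\<integral>x. x\<^sup>2 \<partial>(M \<star> N)) = (\<integral>x. x\<^sup>2 \<partial>M) + (\<integral>x. x\<^sup>2 \<partial>N)"
    unfolding conv using k1 k2 k3 e0 e1 e2 e3 m0
    by (simp add: integrable_distr_eq integral_distr sq)
qed

lemma good_mult:
  assumes "good f B" "good g C"
  shows "good (\<lambda>t. f t * g t) (B + C)"
proof -
  obtain M where M: "real_distribution M" "char M = (\<lambda>t. complex_of_real (f t))"
      "integrable M (\<lambda>x. x\<^sup>2)" "(\<integral>x. x\<^sup>2 \<partial>M) \<le> B" using assms(1) unfolding good_def by blast
  obtain N where N: "real_distribution N" "char N = (\<lambda>t. complex_of_real (g t))"
      "integrable N (\<lambda>x. x\<^sup>2)" "(\<integral>x. x\<^sup>2 \<partial>N) \<le> C" using assms(2) unfolding good_def by blast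
  have m0: "(\<integral>x. x \<partial>M) = 0" by (rule real_char_mean_zero(2)[OF M(1,2,3)])
  note c = conv_facts[OF M(1) N(1)]
  show ?thesis unfolding good_def
    using c(1) c(2) c(3)[OF M(3) N(3) m0] M N by (intro exI[of _ "M \<star> N"]) auto
qed

lemma good_one: "good (\<lambda>t. 1) 0"
proof -
  have rd: "real_distribution (return borel (0::real))"
    unfolding real_distribution_def real_distribution_axioms_def by (auto intro: prob_space_return)
  have "integrable (return borel (0::real)) (\<lambda>x. x\<^sup>2)"
  proof (rule integrable_cong_AE_imp[of _ "\<lambda>x. (0::real)"])
    show "AE x in return borel 0. (0::real) = x\<^sup>2" by (simp add: AE_return)
  qed (auto intro: finite_measure.integrable_const[OF prob_space.finite_measure[OF prob_space_return]])
  then show ?thesis unfolding good_def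
    by (intro exI[of _ "return borel (0::real)"]) (auto simp: rd char_def integral_return)
qed

lemma good_scale:
  assumes "good f B"
  shows "good (\<lambda>t. f (a * t)) (a\<^sup>2 * B)"
proof -
  obtain M where M: "real_distribution M" "char M = (\<lambda>t. complex_of_real (f t))"
      "integrable M (\<lambda>x. x\<^sup>2)" "(\<integral>x. x\<^sup>2 \<partial>M) \<le> B" using assms unfolding good_def by blast
  interpret real_distribution M by fact
  let ?K = "distr M borel ((*) a)"
  have "char ?K t = complex_of_real (f (a * t))" for t
  proof -
    have "char ?K t = char M (a * t)" unfolding char_def
      by (subst integral_distr) (auto simp: mult_ac)
    then show ?thesis using M(2) by simp
  qed
  moreover have "integrable ?K (\<lambda>x. x\<^sup>2)" using M(3)
    by (subst integrable_distr_eq) (auto simp: power_mult_distrib)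
  moreover have "(\<integral>x. x\<^sup>2 \<partial>?K) = a\<^sup>2 * (\<integral>x. x\<^sup>2 \<partial>M)"
    by (subst integral_distr) (auto simp: power_mult_distrib)
  moreover have "a\<^sup>2 * (\<integral>x. x\<^sup>2 \<partial>M) \<le> a\<^sup>2 * B" using M(4) by (simp add: mult_left_mono)
  ultimately show ?thesis unfolding good_def
    by (intro exI[of _ ?K]) (auto intro!: real_distribution_distr)
qed

lemma good_nonneg: "good f B \<Longrightarrow> 0 \<le> B"
  unfolding good_def
proof (elim exE conjE)
  fix M :: "real measure" assume "(\<integral>x. x\<^sup>2 \<partial>M) \<le> B"
  moreover have "0 \<le> (\<integral>x. (x::real)\<^sup>2 \<partial>M)" by (rule integral_nonneg_AE) simp
  ultimately show "0 \<le> B" by linarith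
qed

lemma good_mixture:
  fixes P :: "'a measure" and h :: "'a \<Rightarrow> real"
  assumes g: "good f B" and P: "prob_space P" and h[measurable]: "h \<in> borel_measurable P"
    and hi: "integrable P (\<lambda>u. (h u)\<^sup>2)"
  shows "good (\<lambda>t. \<integral>u. f (t * h u) \<partial>P) (B * (\<integral>u. (h u)\<^sup>2 \<partial>P))"
proof -
  obtain M where M: "real_distribution M" "char M = (\<lambda>t. complex_of_real (f t))"
      "integrable M (\<lambda>x. x\<^sup>2)" "(\<integral>x. x\<^sup>2 \<partial>M) \<le> B" using g unfolding good_def by blast
  interpret M: real_distribution M by fact
  interpret P: prob_space P by fact
  interpret Q: pair_prob_space P M ..
  have sM[measurable_cong]: "sets M = sets borel" by auto
  have fchar: "f t = Re (char M t)" for t using M(2) by simp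
  have fm[measurable]: "f \<in> borel_measurable borel" unfolding fchar[abs_def] by measurable
  have fb: "\<bar>f t\<bar> \<le> 1" for t using M.cmod_char_le_1[of t] M(2) by simp
  let ?Q = "P \<Otimes>\<^sub>M M"
  let ?g = "\<lambda>(u, x). h u * x"
  have gm[measurable]: "?g \<in> borel_measurable ?Q" by measurable
  let ?K = "distr ?Q borel ?g"
  have rd: "real_distribution ?K" by (rule Q.real_distribution_distr) simp
  have ch: "char ?K t = complex_of_real (\<integral>u. f (t * h u) \<partial>P)" for t
  proof -
    have int: "integrable ?Q (\<lambda>z. iexp (t * ?g z))"
      by (rule Q.integrable_const_bound[where B=1]) auto
    have "char ?K t = (\<integral>z. iexp (t * ?g z) \<partial>?Q)" unfolding char_def
      by (subst integral_distr) auto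
    also have "\<dots> = (\<integral>u. (\<integral>x. iexp (t * ?g (u, x)) \<partial>M) \<partial>P)"
      by (rule Q.integral_fst'[OF int, symmetric])
    also have "\<dots> = (\<integral>u. complex_of_real (f (t * h u)) \<partial>P)"
    proof (intro Bochner_Integration.integral_cong refl)
      fix u
      have "(\<integral>x. iexp (t * ?g (u, x)) \<partial>M) = char M (t * h u)"
        unfolding char_def by (simp add: mult.assoc)
      then show "(\<integral>x. iexp (t * ?g (u, x)) \<partial>M) = complex_of_real (f (t * h u))"
        using M(2) by simp
    qed
    also have "\<dots> = complex_of_real (\<integral>u. f (t * h u) \<partial>P)" by simp
    finally show ?thesis .
  qed
  have sq: "(\<lambda>z. (?g z)\<^sup>2) = (\<lambda>(u, x). (h u)\<^sup>2 * x\<^sup>2)" by (auto simp: power_mult_distrib)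
  have inner: "(\<integral>x. (h u)\<^sup>2 * x\<^sup>2 \<partial>M) = (h u)\<^sup>2 * (\<integral>x. x\<^sup>2 \<partial>M)" for u by simp
  have intQ: "integrable ?Q (\<lambda>(u, x). (h u)\<^sup>2 * x\<^sup>2)"
  proof (rule Q.Fubini_integrable)
    show "integrable P (\<lambda>u. \<integral>x. norm ((\<lambda>(u, x). (h u)\<^sup>2 * x\<^sup>2) (u, x)) \<partial>M)"
      using hi by (simp add: inner)
    show "AE u in P. integrable M (\<lambda>x. (\<lambda>(u, x). (h u)\<^sup>2 * x\<^sup>2) (u, x))"
      using M(3) by simp
  qed measurable
  have "integrable ?K (\<lambda>x. x\<^sup>2)"
    by (subst integrable_distr_eq) (use intQ sq in auto)
  moreover have "(\<integral>x. x\<^sup>2 \<partial>?K) = (\<integral>u. (h u)\<^sup>2 \<partial>P) * (\<integral>x. x\<^sup>2 \<partial>M)"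
  proof -
    have "(\<integral>x. x\<^sup>2 \<partial>?K) = (\<integral>z. (\<lambda>(u, x). (h u)\<^sup>2 * x\<^sup>2) z \<partial>?Q)"
      by (subst integral_distr) (auto simp: sq)
    also have "\<dots> = (\<integral>u. (\<integral>x. (h u)\<^sup>2 * x\<^sup>2 \<partial>M) \<partial>P)"
      using Q.integral_fst'[OF intQ] by simp
    also have "\<dots> = (\<integral>u. (h u)\<^sup>2 \<partial>P) * (\<integral>x. x\<^sup>2 \<partial>M)" by (simp add: inner)
    finally show ?thesis .
  qed
  moreover have "(\<integral>u. (h u)\<^sup>2 \<partial>P) * (\<integral>x. x\<^sup>2 \<partial>M) \<le> B * (\<integral>u. (h u)\<^sup>2 \<partial>P)"
  proof -
    have "0 \<le> (\<integral>u. (h u)\<^sup>2 \<partial>P)" by (rule integral_nonneg_AE) simp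
    from mult_right_mono[OF M(4) this] show ?thesis by (simp add: mult.commute)
  qed
  ultimately show ?thesis unfolding good_def using rd ch
    by (intro exI[of _ ?K]) auto
qed

lemma good_char0: "good f B \<Longrightarrow> f 0 = 1"
  unfolding good_def
proof (elim exE conjE)
  fix M :: "real measure" assume "real_distribution M" "char M = (\<lambda>t. complex_of_real (f t))"
  then show "f 0 = 1" using real_distribution.char_zero[of M] by (metis of_real_eq_1_iff)
qed

lemma good_bern:
  assumes g: "good f B" and q: "0 \<le> q" "q \<le> 1"
  shows "good (\<lambda>t. (1 - q) + q * f t) (q * B)"
proof -
  let ?P = "measure_pmf (bernoulli_pmf q)"
  let ?h = "\<lambda>b::bool. if b then (1::real) else 0"
  have "good (\<lambda>t. \<integral>u. f (t * ?h u) \<partial>?P) (B * (\<integral>u. (?h u)\<^sup>2 \<partial>?P))"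
    by (rule good_mixture[OF g]) (auto simp: prob_space_measure_pmf integrable_measure_pmf_finite)
  moreover have "(\<lambda>t. \<integral>u. f (t * ?h u) \<partial>?P) = (\<lambda>t. (1 - q) + q * f t)"
    using q good_char0[OF g] by (auto simp: algebra_simps)
  moreover have "B * (\<integral>u. (?h u)\<^sup>2 \<partial>?P) = q * B" using q by simp
  ultimately show ?thesis by simp
qed

lemma good_limit:
  assumes g: "\<And>n. good (fs n) B" and lim: "\<And>t. (\<lambda>n. fs n t) \<longlonglongrightarrow> f t"
  shows "good f B"
proof -
  have "\<forall>n. \<exists>M. real_distribution M \<and> char M = (\<lambda>t. complex_of_real (fs n t))
      \<and> integrable M (\<lambda>x. x\<^sup>2) \<and> (\<integral>x. x\<^sup>2 \<partial>M) \<le> B" using g unfolding good_def by blast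
  then obtain M where M: "\<And>n. real_distribution (M n)" "\<And>n. char (M n) = (\<lambda>t. complex_of_real (fs n t))"
     "\<And>n. integrable (M n) (\<lambda>x. x\<^sup>2)" "\<And>n. (\<integral>x. x\<^sup>2 \<partial>M n) \<le> B"
    by metis
  have B0: "0 \<le> B" using good_nonneg[OF g[of 0]] .
  have tight: "tight M" unfolding tight_def
  proof (intro conjI allI impI)
    show "real_distribution (M n)" for n by (rule M(1))
    fix \<epsilon> :: real assume e: "\<epsilon> > 0"
    define a where "a = sqrt (B / \<epsilon>) + 1"
    have "0 \<le> sqrt (B / \<epsilon>)" using B0 e by simp
    then have a0: "a > 0" unfolding a_def by linarith
    have "sqrt (B / \<epsilon>) < a" unfolding a_def by simp
    then have "(sqrt (B / \<epsilon>))\<^sup>2 < a\<^sup>2" using B0 e by (intro power_strict_mono) auto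
    then have "B / \<epsilon> < a\<^sup>2" using B0 e by simp
    then have Ba: "B / a\<^sup>2 < \<epsilon>" using e a0 by (simp add: field_simps)
    have "measure (M n) {-a<..a} > 1 - \<epsilon>" for n
    proof -
      interpret real_distribution "M n" by (rule M(1))
      have "measure (M n) {x\<in>space (M n). x\<^sup>2 \<ge> a\<^sup>2} \<le> (\<integral>x. x\<^sup>2 \<partial>M n) / a\<^sup>2"
        by (rule integral_Markov_inequality_measure[OF M(3)]) (use a0 in auto)
      also have "\<dots> \<le> B / a\<^sup>2" using M(4)[of n] by (simp add: divide_right_mono)
      finally have m1: "measure (M n) {x. x\<^sup>2 \<ge> a\<^sup>2} \<le> B / a\<^sup>2" by simp
      have sub: "UNIV - {x. x\<^sup>2 \<ge> a\<^sup>2} \<subseteq> {-a<..a}"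
      proof
        fix x assume "x \<in> UNIV - {x. x\<^sup>2 \<ge> a\<^sup>2}"
        then have "x\<^sup>2 < a\<^sup>2" by simp
        then have "\<bar>x\<bar> < a" using a0 by (metis abs_le_square_iff abs_of_pos not_le)
        then show "x \<in> {-a<..a}" by auto
      qed
      have "measure (M n) (UNIV - {x. x\<^sup>2 \<ge> a\<^sup>2}) = 1 - measure (M n) {x. x\<^sup>2 \<ge> a\<^sup>2}"
        using prob_compl[of "{x. x\<^sup>2 \<ge> a\<^sup>2}"] by (simp add: Compl_eq_Diff_UNIV)
      moreover have "measure (M n) (UNIV - {x. x\<^sup>2 \<ge> a\<^sup>2}) \<le> measure (M n) {-a<..a}"
        by (rule finite_measure_mono[OF sub]) simp
      ultimately show ?thesis using m1 Ba by linarith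
    qed
    then show "\<exists>a b. a < b \<and> (\<forall>n. 1 - \<epsilon> < measure (M n) {a<..b})"
      using a0 by (intro exI[of _ "-a"] exI[of _ a]) auto
  qed
  obtain r M' where r: "strict_mono (r :: nat \<Rightarrow> nat)" and M': "real_distribution M'"
      and wc: "weak_conv_m (M \<circ> id \<circ> r) M'"
    using tight_imp_convergent_subsubsequence[OF tight, of id] by (auto simp: strict_mono_def)
  have rdr: "\<And>n. real_distribution ((M \<circ> id \<circ> r) n)" using M(1) by simp
  have chM': "char M' = (\<lambda>t. complex_of_real (f t))"
  proof
    fix t
    have "(\<lambda>n. char ((M \<circ> id \<circ> r) n) t) \<longlonglongrightarrow> char M' t"
      by (rule levy_continuity1[OF rdr M' wc])
    moreover have "(\<lambda>n. char ((M \<circ> id \<circ> r) n) t) \<longlonglongrightarrow> complex_of_real (f t)"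
      using LIMSEQ_subseq_LIMSEQ[OF lim r, of t] M(2) by (simp add: comp_def tendsto_of_real)
    ultimately show "char M' t = complex_of_real (f t)" by (rule LIMSEQ_unique)
  qed
  define gK where "gK = (\<lambda>(K::nat) (x::real). min (x\<^sup>2) (real K))"
  have gKint: "integrable N (gK K)" if "real_distribution N" for N K
  proof -
    interpret real_distribution N by fact
    show ?thesis
      by (rule integrable_const_bound[where B="real K"]) (auto simp: gK_def)
  qed
  have gK_le: "(\<integral>x. gK K x \<partial>M') \<le> B" for K
  proof -
    have "(\<lambda>n. \<integral>x. gK K x \<partial>(M \<circ> id \<circ> r) n) \<longlonglongrightarrow> (\<integral>x. gK K x \<partial>M')"
      by (rule weak_conv_imp_integral_bdd_continuous_conv[OF rdr M' wc, where B="real K"])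
         (auto simp: gK_def intro!: continuous_intros)
    moreover have "(\<integral>x. gK K x \<partial>(M \<circ> id \<circ> r) n) \<le> B" for n
    proof -
      have "(\<integral>x. gK K x \<partial>M (r n)) \<le> (\<integral>x. x\<^sup>2 \<partial>M (r n))"
        by (rule integral_mono[OF gKint[OF M(1)] M(3)]) (auto simp: gK_def)
      then show ?thesis using M(4)[of "r n"] by simp
    qed
    ultimately show ?thesis using LIMSEQ_le_const2 by blast
  qed
  interpret M': real_distribution M' by fact
  have mono: "incseq (\<lambda>K. \<integral>x. gK K x \<partial>M')"
    by (intro monoI integral_mono gKint[OF M']) (auto simp: gK_def)
  obtain L where L: "(\<lambda>K. \<integral>x. gK K x \<partial>M') \<longlonglongrightarrow> L" using incseq_convergent[OF mono] gK_le by blast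
  have LB: "L \<le> B" using LIMSEQ_le_const2[OF L] gK_le by auto
  have lim2: "(\<lambda>K. gK K x) \<longlonglongrightarrow> x\<^sup>2" for x
  proof (rule tendsto_eventually)
    obtain K0 :: nat where "x\<^sup>2 \<le> real K0" using real_arch_simple by blast
    then show "\<forall>\<^sub>F K in sequentially. gK K x = x\<^sup>2"
      by (intro eventually_sequentiallyI[of K0]) (auto simp: gK_def)
  qed
  have "integrable M' (\<lambda>x. x\<^sup>2) \<and> (\<integral>x. x\<^sup>2 \<partial>M') = L"
    by (intro conjI integral_monotone_convergence_nonneg[OF gKint[OF M'] _ _ _ L])
       (use lim2[unfolded gK_def] in \<open>auto simp: gK_def mono_def\<close>)
  then show ?thesis unfolding good_def using M' chM' LB by blast
qed

lemma good_normal: "good (\<lambda>t. exp (- (t\<^sup>2) / 2)) 1"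
proof -
  have "integrable std_normal_distribution (\<lambda>x. x ^ (2 * 1))"
    "(\<integral>x. x ^ (2 * 1) \<partial>std_normal_distribution) = fact (2 * 1) / (2 ^ 1 * fact 1)"
    using std_normal_distribution_even_moments[of 1] by auto
  then have "integrable std_normal_distribution (\<lambda>x. x\<^sup>2)" "(\<integral>x. x\<^sup>2 \<partial>std_normal_distribution) = 1"
    by (simp_all add: numeral_2_eq_2)
  then show ?thesis unfolding good_def
    using real_dist_normal_dist char_std_normal_distribution by (intro exI[of _ std_normal_distribution]) auto
qed

lemma exp_moment:
  assumes l: "0 < l"
  shows "has_bochner_integral lborel (\<lambda>x. exponential_density l x * x ^ i) (fact i / l ^ i)"
proof (rule has_bochner_integral_nn_integral)
  show "AE x in lborel. 0 \<le> exponential_density l x * x ^ i"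
    using l by (auto simp: exponential_density_def)
  show "(\<integral>\<^sup>+ x. ennreal (exponential_density l x * x ^ i) \<partial>lborel) = ennreal (fact i / l ^ i)"
    using nn_integral_erlang_ith_moment[OF l, of 0 i] by simp
qed (use l in auto)

lemma exp_integral:
  assumes s: "0 \<le> s"
  shows "(\<integral>u. exp (- s * \<bar>u\<bar>) \<partial>density lborel (exponential_density 1)) = 1 / (1 + s)"
proof -
  have "(\<integral>u. exp (- s * \<bar>u\<bar>) \<partial>density lborel (exponential_density 1))
      = (\<integral>u. exponential_density 1 u * exp (- s * \<bar>u\<bar>) \<partial>lborel)"
    by (subst integral_density) (auto simp: exponential_density_def)
  also have "\<dots> = (\<integral>u. exponential_density (1 + s) u * u ^ 0 / (1 + s) \<partial>lborel)"
  proof (intro Bochner_Integration.integral_cong refl)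
    fix u :: real
    have e: "exp (- u) * exp (- s * u) = exp (- u * (1 + s))"
      by (simp add: exp_add[symmetric] algebra_simps)
    show "exponential_density 1 u * exp (- s * \<bar>u\<bar>) = exponential_density (1 + s) u * u ^ 0 / (1 + s)"
      using s e by (cases "u < 0") (auto simp: exponential_density_def)
  qed
  also have "\<dots> = (fact 0 / (1 + s) ^ 0) / (1 + s)"
    using has_bochner_integral_integral_eq[OF exp_moment[of "1 + s" 0]] s by simp
  finally show ?thesis by simp
qed

lemma good_laplace: "good (\<lambda>t. 1 / (1 + b\<^sup>2 * t\<^sup>2)) (2 * b\<^sup>2)"
proof -
  let ?P = "density lborel (exponential_density 1)"
  let ?h = "\<lambda>u. sqrt (2 * \<bar>u\<bar>) * b"
  have P: "prob_space ?P" by (rule prob_space_exponential_density) simp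
  have hsq: "(?h u)\<^sup>2 = 2 * b\<^sup>2 * \<bar>u\<bar>" for u by (simp add: power_mult_distrib)
  have absu: "exponential_density 1 u * \<bar>u\<bar> = exponential_density 1 u * u ^ 1" for u
    by (auto simp: exponential_density_def)
  have hb: "has_bochner_integral lborel (\<lambda>u. exponential_density 1 u * \<bar>u\<bar>) 1"
    using exp_moment[of 1 1] by (simp add: absu)
  have hbi: "integrable lborel (\<lambda>u. exponential_density 1 u * \<bar>u\<bar>)"
    using hb by (simp add: has_bochner_integral_iff)
  have "integrable lborel (\<lambda>u. (2 * b\<^sup>2) * (exponential_density 1 u * \<bar>u\<bar>))"
    by (rule integrable_mult_right[OF hbi])
  then have hbi2: "integrable lborel (\<lambda>u. exponential_density 1 u * (2 * b\<^sup>2 * \<bar>u\<bar>))"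
    by (simp add: mult_ac)
  have hi: "integrable ?P (\<lambda>u. (?h u)\<^sup>2)"
    unfolding hsq using hbi2
    by (subst integrable_density) (auto simp: exponential_density_def)
  have hint: "(\<integral>u. (?h u)\<^sup>2 \<partial>?P) = 2 * b\<^sup>2"
  proof -
    have "(\<integral>u. (?h u)\<^sup>2 \<partial>?P) = (\<integral>u. exponential_density 1 u * (2 * b\<^sup>2 * \<bar>u\<bar>) \<partial>lborel)"
      unfolding hsq by (subst integral_density) (auto simp: exponential_density_def)
    also have "\<dots> = (\<integral>u. 2 * b\<^sup>2 * (exponential_density 1 u * \<bar>u\<bar>) \<partial>lborel)"
      by (simp add: mult_ac)
    also have "\<dots> = 2 * b\<^sup>2 * (\<integral>u. exponential_density 1 u * \<bar>u\<bar> \<partial>lborel)"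
      by (rule integral_mult_right_zero)
    also have "\<dots> = 2 * b\<^sup>2" using has_bochner_integral_integral_eq[OF hb] by simp
    finally show ?thesis .
  qed
  have "good (\<lambda>t. \<integral>u. exp (- ((t * ?h u)\<^sup>2) / 2) \<partial>?P) (1 * (\<integral>u. (?h u)\<^sup>2 \<partial>?P))"
    by (rule good_mixture[OF good_normal P _ hi]) simp
  moreover have "(\<lambda>t. \<integral>u. exp (- ((t * ?h u)\<^sup>2) / 2) \<partial>?P) = (\<lambda>t. 1 / (1 + b\<^sup>2 * t\<^sup>2))"
  proof
    fix t
    have "(\<lambda>u. exp (- ((t * ?h u)\<^sup>2) / 2)) = (\<lambda>u. exp (- (b\<^sup>2 * t\<^sup>2) * \<bar>u\<bar>))"
      by (auto simp: power_mult_distrib hsq)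
    then show "(\<integral>u. exp (- ((t * ?h u)\<^sup>2) / 2) \<partial>?P) = 1 / (1 + b\<^sup>2 * t\<^sup>2)"
      using exp_integral[of "b\<^sup>2 * t\<^sup>2"] by simp
  qed
  ultimately show ?thesis using hint by simp
qed

lemma good_power: "good f B \<Longrightarrow> good (\<lambda>t. f t ^ n) (real n * B)"
proof (induction n)
  case 0 then show ?case using good_one by simp
next
  case (Suc n)
  from good_mult[OF Suc.prems Suc.IH[OF Suc.prems]] show ?case by (simp add: algebra_simps)
qed

lemma good_prod:
  assumes "\<And>k. k \<in> A \<Longrightarrow> good (g k) (B k)" "finite A"
  shows "good (\<lambda>t. \<Prod>k\<in>A. g k t) (\<Sum>k\<in>A. B k)"
  using assms(2,1)
proof (induction A rule: finite_induct)
  case empty then show ?case using good_one by simp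
next
  case (insert x F)
  have IH: "good (\<lambda>t. \<Prod>k\<in>F. g k t) (\<Sum>k\<in>F. B k)" using insert.IH insert.prems by blast
  from good_mult[OF insert.prems[of x] IH] insert.hyps show ?case by simp
qed

lemma good_mono: "good f B \<Longrightarrow> B \<le> C \<Longrightarrow> good f C"
  unfolding good_def by force

lemma poisson_aux: "(0::real) < M \<Longrightarrow> 1 + l * (x - 1) / M = (1 - l / M) + l / M * x"
  by (simp add: field_simps)

lemma good_poisson:
  assumes g: "good f B" and l: "0 \<le> l"
  shows "good (\<lambda>t. exp (l * (f t - 1))) (l * B)"
proof -
  obtain N0 :: nat where N0: "l \<le> real N0" using real_arch_simple[of l] by blast
  define N where "N = Suc N0"
  have N: "l \<le> real N" "0 < N" using N0 unfolding N_def by auto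
  define m where "m = (\<lambda>n. n + N)"
  have m0: "0 < real (m n)" for n using N unfolding m_def by simp
  have q: "0 \<le> l / real (m n)" "l / real (m n) \<le> 1" for n
    using N l m0[of n] unfolding m_def by (auto simp: field_simps)
  have "good (\<lambda>t. ((1 - l / real (m n)) + (l / real (m n)) * f t) ^ m n) (real (m n) * (l / real (m n) * B))" for n
    by (rule good_power[OF good_bern[OF g q]])
  moreover have "real (m n) * (l / real (m n) * B) = l * B" for n using m0[of n] by simp
  ultimately have gn: "good (\<lambda>t. ((1 - l / real (m n)) + (l / real (m n)) * f t) ^ m n) (l * B)" for n
    by metis
  show ?thesis
  proof (rule good_limit[OF gn])
    fix t
    have "(\<lambda>n. (1 + (l * (f t - 1)) / real n) ^ n) \<longlonglongrightarrow> exp (l * (f t - 1))"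
      by (rule tendsto_exp_limit_sequentially)
    then have lim: "(\<lambda>n. (1 + (l * (f t - 1)) / real (n + N)) ^ (n + N)) \<longlonglongrightarrow> exp (l * (f t - 1))"
      by (rule LIMSEQ_ignore_initial_segment)
    have eq: "(1 + (l * (f t - 1)) / real (n + N)) = (1 - l / real (n + N)) + (l / real (n + N)) * f t" for n
    proof -
      have "0 < real (n + N)" using m0[of n] unfolding m_def by simp
      from poisson_aux[OF this, of l "f t"] show ?thesis by simp
    qed
    show "(\<lambda>n. ((1 - l / real (m n)) + (l / real (m n)) * f t) ^ m n) \<longlonglongrightarrow> exp (l * (f t - 1))"
      unfolding m_def using lim by (simp only: eq)
  qed
qed

definition Sp :: "nat \<Rightarrow> real \<Rightarrow> real" where
  "Sp n t = (\<Prod>k=1..n. 1 + t\<^sup>2 / (pi\<^sup>2 * (real k)\<^sup>2))"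

definition Cp :: "nat \<Rightarrow> real \<Rightarrow> real" where
  "Cp n t = (\<Prod>k=1..n. 1 + 4 * t\<^sup>2 / (pi\<^sup>2 * (2 * real k - 1)\<^sup>2))"

lemma Sp_pos: "0 < Sp n t"
  unfolding Sp_def by (intro prod_pos) (auto intro: add_pos_nonneg)

lemma Cp_pos: "0 < Cp n t"
  unfolding Cp_def by (intro prod_pos) (auto intro: add_pos_nonneg)

lemma sinh_prod: "(\<lambda>n. t * Sp n t) \<longlonglongrightarrow> sinh t"
proof -
  define z where "z = \<i> * complex_of_real (t / pi)"
  have lim: "(\<lambda>n. of_real pi * z * (\<Prod>k=1..n. 1 - z^2 / of_nat k^2)) \<longlonglongrightarrow> sin (of_real pi * z)"
    by (rule sin_product_formula_complex)
  have pz: "of_real pi * z = \<i> * complex_of_real t" unfolding z_def by simp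
  have "z^2 = \<i>^2 * (complex_of_real (t / pi))^2" by (simp only: z_def power_mult_distrib)
  then have z2: "z^2 = - complex_of_real ((t / pi)\<^sup>2)" by simp
  have trm: "1 - z^2 / of_nat k^2 = complex_of_real (1 + t\<^sup>2 / (pi\<^sup>2 * (real k)\<^sup>2))" for k
    unfolding z2 by (simp add: power_divide field_simps)
  have lhs: "of_real pi * z * (\<Prod>k=1..n. 1 - z^2 / of_nat k^2) = \<i> * complex_of_real (t * Sp n t)" for n
    unfolding pz trm Sp_def by simp
  have rhs: "sin (of_real pi * z) = \<i> * complex_of_real (sinh t)"
    unfolding pz sin_i_times by (simp add: sinh_def exp_of_real exp_minus)
  have "(\<lambda>n. \<i> * complex_of_real (t * Sp n t)) \<longlonglongrightarrow> \<i> * complex_of_real (sinh t)"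
    using lim unfolding lhs rhs .
  then have "(\<lambda>n. - \<i> * (\<i> * complex_of_real (t * Sp n t))) \<longlonglongrightarrow> - \<i> * (\<i> * complex_of_real (sinh t))"
    by (rule tendsto_mult[OF tendsto_const])
  moreover have ii: "- \<i> * (\<i> * x) = x" for x :: complex by (simp add: mult.assoc[symmetric])
  ultimately have "(\<lambda>n. complex_of_real (t * Sp n t)) \<longlonglongrightarrow> complex_of_real (sinh t)" by (simp only: ii)
  then show ?thesis by (simp only: tendsto_of_real_iff)
qed

lemma Sp_lim: "t \<noteq> 0 \<Longrightarrow> (\<lambda>n. Sp n t) \<longlonglongrightarrow> sinh t / t"
  using tendsto_divide[OF sinh_prod[of t] tendsto_const[of t]] by simp

lemma Sp_0[simp]: "Sp n 0 = 1" unfolding Sp_def by simp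
lemma Cp_0[simp]: "Cp n 0 = 1" unfolding Cp_def by simp

lemma Sp_Cp: "Sp (2 * n) (2 * t) = Cp n t * Sp n t"
proof (induction n)
  case 0 then show ?case by (simp add: Sp_def Cp_def)
next
  case (Suc n)
  have a: "Sp (2 * Suc n) (2 * t) = Sp (2 * n) (2 * t) * (1 + (2*t)\<^sup>2 / (pi\<^sup>2 * (real (2*n+1))\<^sup>2))
      * (1 + (2*t)\<^sup>2 / (pi\<^sup>2 * (real (2*n+2))\<^sup>2))"
    unfolding Sp_def by (simp add: mult_2 prod.nat_ivl_Suc' ac_simps)
  have b: "Cp (Suc n) t = Cp n t * (1 + 4 * t\<^sup>2 / (pi\<^sup>2 * (2 * real (Suc n) - 1)\<^sup>2))"
    unfolding Cp_def by (simp add: prod.nat_ivl_Suc')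
  have c: "Sp (Suc n) t = Sp n t * (1 + t\<^sup>2 / (pi\<^sup>2 * (real (Suc n))\<^sup>2))"
    unfolding Sp_def by (simp add: prod.nat_ivl_Suc')
  have d: "(2*t)\<^sup>2 / (pi\<^sup>2 * (real (2*n+1))\<^sup>2) = 4 * t\<^sup>2 / (pi\<^sup>2 * (2 * real (Suc n) - 1)\<^sup>2)"
    by (simp add: power_mult_distrib algebra_simps)
  have e0: "real (2*n+2) = 2 * real (Suc n)" by simp
  have e: "(2*t)\<^sup>2 / (pi\<^sup>2 * (real (2*n+2))\<^sup>2) = t\<^sup>2 / (pi\<^sup>2 * (real (Suc n))\<^sup>2)"
    unfolding e0 by (simp only: power_mult_distrib) simp
  show ?case unfolding a b c d e Suc.IH by (simp add: ac_simps)
qed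

lemma cosh_prod: "(\<lambda>n. Cp n t) \<longlonglongrightarrow> cosh t"
proof (cases "t = 0")
  case True then show ?thesis by simp
next
  case False
  have 1: "(\<lambda>n. Sp (2 * n) (2 * t)) \<longlonglongrightarrow> sinh (2 * t) / (2 * t)"
    using LIMSEQ_subseq_LIMSEQ[OF Sp_lim[of "2*t"], of "\<lambda>n. 2 * n"] False
    by (simp add: strict_mono_def comp_def)
  have "(\<lambda>n. Sp (2 * n) (2 * t) / Sp n t) \<longlonglongrightarrow> (sinh (2 * t) / (2 * t)) / (sinh t / t)"
    by (rule tendsto_divide[OF 1 Sp_lim[OF False]]) (use False in \<open>auto simp: sinh_zero_iff\<close>)
  moreover have "Sp (2 * n) (2 * t) / Sp n t = Cp n t" for n
    using Sp_pos[of n t] by (simp add: Sp_Cp)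
  moreover have "(sinh (2 * t) / (2 * t)) / (sinh t / t) = cosh t"
    using False sinh_double[of t] by (simp add: field_simps sinh_zero_iff)
  ultimately show ?thesis by simp
qed

lemma inv_sq_sums: "(\<lambda>k. 1/(real k + 1)\<^sup>2) sums (pi\<^sup>2/6)"
  using inverse_squares_sums by (simp add: add.commute)

lemma inv_sq_summable: "summable (\<lambda>k. 1 / (real k + 1)\<^sup>2)"
  using inv_sq_sums by (auto simp: sums_iff)

lemma inv_sq_bound: "(\<Sum>k=1..n. 1 / (pi\<^sup>2 * (real k)\<^sup>2)) \<le> 1 / 6"
proof -
  have "(\<Sum>k=1..n. 1 / (real k)\<^sup>2) = (\<Sum>k<n. 1 / (real k + 1)\<^sup>2)"
    using sum.atLeast1_atMost_eq[of "\<lambda>k. 1 / (real k)\<^sup>2" n] by (simp add: add.commute)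
  also have "\<dots> \<le> pi\<^sup>2 / 6"
    using sum_le_suminf[OF inv_sq_summable, of "{..<n}"] inv_sq_sums
    by (auto simp: sums_iff)
  finally have "(\<Sum>k=1..n. 1 / (real k)\<^sup>2) \<le> pi\<^sup>2 / 6" .
  moreover have "(\<Sum>k=1..n. 1 / (pi\<^sup>2 * (real k)\<^sup>2)) = (\<Sum>k=1..n. 1 / (real k)\<^sup>2) / pi\<^sup>2"
    by (simp add: sum_divide_distrib mult.commute)
  ultimately show ?thesis by (simp add: divide_le_eq)
qed

lemma deriv_local:
  assumes "(G has_real_derivative D) (at t)" "t \<noteq> 0" "\<And>s. s \<noteq> 0 \<Longrightarrow> g s = G s"
  shows "deriv g t = D"
proof (rule DERIV_imp_deriv)
  show "(g has_real_derivative D) (at t)"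
    by (rule has_field_derivative_transform_within_open[OF assms(1), of "-{0}"]) (use assms in auto)
qed

lemma bdcf_C: "bdcf phi_C t = exp (- t * tanh t)"
proof (cases "t = 0")
  case True then show ?thesis by (simp add: bdcf_def)
next
  case False
  have "((\<lambda>s. ln (1 / cosh s)) has_real_derivative (- (sinh t / cosh t))) (at t)"
    by (auto intro!: derivative_eq_intros simp: field_simps)
  then have "deriv (\<lambda>s. ln (phi_C s)) t = - (sinh t / cosh t)"
    using False by (intro deriv_local) (auto simp: phi_C_def)
  then show ?thesis using False by (simp add: bdcf_def tanh_def)
qed

lemma phi_S_alt: "s \<noteq> 0 \<Longrightarrow> phi_S s = s / sinh s" by (simp add: phi_S_def)

lemma sdivsinh_pos: "s \<noteq> 0 \<Longrightarrow> 0 < s / sinh (s::real)"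
  by (cases "s > 0") (auto intro: divide_pos_pos divide_neg_neg simp: not_less)

lemma bdcf_S: "t \<noteq> 0 \<Longrightarrow> bdcf phi_S t = exp (1 - t * (cosh t / sinh t))"
proof -
  assume t: "t \<noteq> 0"
  have sh: "sinh t \<noteq> 0" using t by simp
  have "((\<lambda>s. ln (s / sinh s)) has_real_derivative
          ((1 * sinh t - t * cosh t) / (sinh t)\<^sup>2) / (t / sinh t)) (at t)"
    using sdivsinh_pos[OF t] sh by (auto intro!: derivative_eq_intros simp: power2_eq_square)
  then have "deriv (\<lambda>s. ln (phi_S s)) t = ((1 * sinh t - t * cosh t) / (sinh t)\<^sup>2) / (t / sinh t)"
    using t by (intro deriv_local) (auto simp: phi_S_def)
  moreover have "t * (((1 * sinh t - t * cosh t) / (sinh t)\<^sup>2) / (t / sinh t)) = 1 - t * (cosh t / sinh t)"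
    using t sh by (simp add: field_simps power2_eq_square)
  ultimately show ?thesis using t by (simp add: bdcf_def)
qed

lemma tanhdiv_pos: "s \<noteq> 0 \<Longrightarrow> 0 < sinh s / (s * cosh (s::real))"
  by (cases "s > 0") (auto intro: divide_pos_pos divide_neg_neg simp: not_less mult_neg_pos)

lemma bdcf_T: "t \<noteq> 0 \<Longrightarrow> bdcf phi_T t = exp ((1 / cosh t) * (t / sinh t) - 1)"
proof -
  assume t: "t \<noteq> 0"
  have sh: "sinh t \<noteq> 0" using t by simp
  have ch: "cosh t \<noteq> 0" using cosh_real_pos[of t] by linarith
  have eqf: "phi_T s = sinh s / (s * cosh s)" if "s \<noteq> 0" for s
    using that by (simp add: phi_T_def tanh_def)
  have "((\<lambda>s. ln (sinh s / (s * cosh s))) has_real_derivative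
      ((cosh t * (t * cosh t) - sinh t * (1 * cosh t + t * sinh t)) / (t * cosh t)\<^sup>2) / (sinh t / (t * cosh t))) (at t)"
    using tanhdiv_pos[OF t] t ch by (auto intro!: derivative_eq_intros simp: power2_eq_square ac_simps)
  then have "deriv (\<lambda>s. ln (phi_T s)) t =
      ((cosh t * (t * cosh t) - sinh t * (1 * cosh t + t * sinh t)) / (t * cosh t)\<^sup>2) / (sinh t / (t * cosh t))"
    using t by (intro deriv_local) (auto simp: eqf)
  moreover have "t * (((cosh t * (t * cosh t) - sinh t * (1 * cosh t + t * sinh t)) / (t * cosh t)\<^sup>2) / (sinh t / (t * cosh t)))
      = (1 / cosh t) * (t / sinh t) - 1"
  proof -
    have c2: "(cosh t)\<^sup>2 = (sinh t)\<^sup>2 + 1" by (rule cosh_square_eq)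
    have key: "cosh t * cosh t = sinh t * sinh t + 1" using c2 by (simp add: power2_eq_square)
    have e1: "cosh t * (t * cosh t) - sinh t * (1 * cosh t + t * sinh t) = t - sinh t * cosh t"
      using key by (simp add: algebra_simps)
    show ?thesis unfolding e1 using t sh ch
      by (simp add: field_simps power2_eq_square)
  qed
  ultimately show ?thesis using t by (simp add: bdcf_def)
qed

lemma bdcf_T2: "bdcf phi_T t = exp (phi_S (2 * t) - 1)"
proof (cases "t = 0")
  case True then show ?thesis by (simp add: bdcf_def phi_S_def)
next
  case False
  have "(1 / cosh t) * (t / sinh t) = 2 * t / sinh (2 * t)"
    using False sinh_double[of t] by (simp add: field_simps)
  then show ?thesis using False bdcf_T[OF False] by (simp add: phi_S_def)
qed

definition fS :: "nat \<Rightarrow> real \<Rightarrow> real" where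
  "fS k s = ln (1 + s\<^sup>2 / (pi\<^sup>2 * (real k + 1)\<^sup>2))"

definition dS :: "nat \<Rightarrow> real \<Rightarrow> real" where
  "dS k s = 2 * s / (pi\<^sup>2 * (real k + 1)\<^sup>2 + s\<^sup>2)"

lemma ln_sq_deriv:
  assumes A: "0 < (A::real)"
  shows "((\<lambda>s. ln (1 + s\<^sup>2 / A)) has_real_derivative 2 * s / (A + s\<^sup>2)) (at s within S)"
proof -
  have p: "0 < 1 + s\<^sup>2 / A" using A by (intro add_pos_nonneg) auto
  have q: "0 < A + s\<^sup>2" using A by (intro add_pos_nonneg) auto
  have "0 < A * (A + s * s)" using A q by (simp add: power2_eq_square)
  then have d: "A * A + A * (s * s) \<noteq> 0" by (simp add: algebra_simps)
  show ?thesis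
    using A p q d by (auto intro!: derivative_eq_intros simp: field_simps power2_eq_square)
qed

lemma dS_deriv: "(fS k has_real_derivative dS k s) (at s within S)"
  unfolding fS_def[abs_def] dS_def by (rule ln_sq_deriv) simp

lemma dS_bound:
  assumes "\<bar>s\<bar> < R"
  shows "norm (dS k s) \<le> 2 * R * (1 / (real k + 1)\<^sup>2)"
proof -
  have "1 \<le> pi\<^sup>2" using pi_gt3 by (intro one_le_power) simp
  from mult_right_mono[OF this, of "(real k + 1)\<^sup>2"]
  have c: "(real k + 1)\<^sup>2 \<le> pi\<^sup>2 * (real k + 1)\<^sup>2" by simp
  have "norm (dS k s) = 2 * \<bar>s\<bar> / (pi\<^sup>2 * (real k + 1)\<^sup>2 + s\<^sup>2)"
    unfolding dS_def by (simp add: abs_mult)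
  also have "\<dots> \<le> 2 * \<bar>s\<bar> / (real k + 1)\<^sup>2"
  proof (rule divide_left_mono)
    show "(real k + 1)\<^sup>2 \<le> pi\<^sup>2 * (real k + 1)\<^sup>2 + s\<^sup>2" using c by (simp add: add_increasing2)
    have "0 < pi\<^sup>2 * (real k + 1)\<^sup>2 + s\<^sup>2" by (intro add_pos_nonneg) auto
    then show "0 < (pi\<^sup>2 * (real k + 1)\<^sup>2 + s\<^sup>2) * (real k + 1)\<^sup>2" by simp
  qed simp
  also have "\<dots> \<le> 2 * R / (real k + 1)\<^sup>2"
    using assms by (intro divide_right_mono) auto
  finally show ?thesis by simp
qed

lemma fS_partial: "(\<Sum>k<n. fS k s) = ln (Sp n s)"
proof -
  have "ln (Sp n s) = (\<Sum>k=1..n. ln (1 + s\<^sup>2 / (pi\<^sup>2 * (real k)\<^sup>2)))"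
    unfolding Sp_def by (rule ln_prod) (auto intro: add_pos_nonneg simp: add_nonneg_eq_0_iff)
  also have "\<dots> = (\<Sum>k<n. fS k s)"
    using sum.atLeast1_atMost_eq[of "\<lambda>k. ln (1 + s\<^sup>2 / (pi\<^sup>2 * (real k)\<^sup>2))" n]
    by (simp add: fS_def add.commute)
  finally show ?thesis by simp
qed

lemma fS_sums: "s \<noteq> 0 \<Longrightarrow> (\<lambda>k. fS k s) sums ln (sinh s / s)"
proof -
  assume s: "s \<noteq> 0"
  have pos: "0 < sinh s / s" using sdivsinh_pos[OF s] by (simp add: zero_less_divide_iff)
  have "(\<lambda>n. ln (Sp n s)) \<longlonglongrightarrow> ln (sinh s / s)"
    by (rule tendsto_ln[OF Sp_lim[OF s]]) (use pos in auto)
  then show ?thesis unfolding sums_def fS_partial .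
qed

lemma fS_zero: "fS k 0 = 0" by (simp add: fS_def)

lemma G_deriv: "((\<lambda>x. \<Sum>n. fS n x) has_real_derivative (\<Sum>n. dS n t)) (at t)"
proof -
  define R where "R = \<bar>t\<bar> + 1"
  have uc: "uniformly_convergent_on {-R<..<R} (\<lambda>n x. \<Sum>i<n. dS i x)"
  proof (rule Weierstrass_m_test')
    show "norm (dS n x) \<le> 2 * R * (1 / (real n + 1)\<^sup>2)" if "x \<in> {-R<..<R}" for n x
      using that by (intro dS_bound) auto
    show "summable (\<lambda>n. 2 * R * (1 / (real n + 1)\<^sup>2))"
      by (intro summable_mult inv_sq_summable)
  qed
  have tin: "t \<in> interior {-R<..<R}" unfolding R_def by auto
  have z: "(0::real) \<in> {-R<..<R}" unfolding R_def by auto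
  have sz: "summable (\<lambda>n. fS n 0)" by (simp add: fS_zero)
  show ?thesis
    by (rule has_field_derivative_series'(2)[OF convex_real_interval(8) dS_deriv uc z sz tin])
qed

lemma ln_phi_S: "ln (phi_S s) = - (\<Sum>n. fS n s)"
proof (cases "s = 0")
  case True then show ?thesis by (simp add: phi_S_def fS_zero)
next
  case False
  have "(\<Sum>n. fS n s) = ln (sinh s / s)" using fS_sums[OF False] by (simp add: sums_iff)
  moreover have "ln (phi_S s) = - ln (sinh s / s)"
    using sdivsinh_pos[OF False] False by (simp add: phi_S_def ln_div zero_less_divide_iff)
  ultimately show ?thesis by simp
qed

lemma bdcf_S_series: "bdcf phi_S t = exp (- (\<Sum>n. t * dS n t))"
proof (cases "t = 0")
  case True then show ?thesis by (simp add: bdcf_def)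
next
  case False
  have "deriv (\<lambda>s. ln (phi_S s)) t = - (\<Sum>n. dS n t)"
    unfolding ln_phi_S by (intro DERIV_imp_deriv derivative_intros G_deriv)
  moreover have "summable (\<lambda>n. dS n t)"
  proof -
    have "summable (\<lambda>n. 2 * (\<bar>t\<bar> + 1) * (1 / (real n + 1)\<^sup>2))"
      by (intro summable_mult inv_sq_summable)
    then show ?thesis by (rule summable_comparison_test'[where N=0]) (intro dS_bound, simp)
  qed
  ultimately show ?thesis using False by (simp add: bdcf_def suminf_mult)
qed

lemma good_lap2: "0 \<le> a \<Longrightarrow> good (\<lambda>t. 1 / (1 + a * t\<^sup>2)) (2 * a)"
  using good_laplace[of "sqrt a"] by simp

lemma good_lapmix: "0 \<le> a \<Longrightarrow> 0 \<le> q \<Longrightarrow> q \<le> 1 \<Longrightarrow> good (\<lambda>t. (1 - q) + q * (1 / (1 + a * t\<^sup>2))) (2 * a)"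
  by (rule good_mono[OF good_bern[OF good_lap2]]) (auto simp: mult_left_le_one_le)

lemma good_prod_limit:
  assumes "\<And>n k. k \<in> {1..n} \<Longrightarrow> good (g k) (b k)" "\<And>n. (\<Sum>k=1..n. b k) \<le> B"
    and "\<And>t. (\<lambda>n. \<Prod>k=1..n. g k t) \<longlonglongrightarrow> f t"
  shows "good f B"
proof (rule good_limit[of "\<lambda>n t. \<Prod>k=1..n. g k t"])
  show "good (\<lambda>t. \<Prod>k=1..n. g k t) B" for n
    by (rule good_mono[OF good_prod[OF assms(1)] assms(2)]) auto
qed (rule assms(3))

lemma sum_bound_gen:
  assumes "\<And>k. k \<ge> 1 \<Longrightarrow> b k \<le> C / (pi\<^sup>2 * (real k)\<^sup>2)" "0 \<le> C"
  shows "(\<Sum>k=1..n. b k) \<le> C / 6"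
proof -
  have "(\<Sum>k=1..n. b k) \<le> (\<Sum>k=1..n. C * (1 / (pi\<^sup>2 * (real k)\<^sup>2)))"
    using assms(1) by (intro sum_mono) auto
  also have "\<dots> = C * (\<Sum>k=1..n. 1 / (pi\<^sup>2 * (real k)\<^sup>2))" by (simp add: sum_distrib_left)
  also have "\<dots> \<le> C * (1/6)" by (intro mult_left_mono inv_sq_bound assms(2))
  finally show ?thesis by simp
qed

lemma inv_prod: "1 / (\<Prod>k\<in>A. f k) = (\<Prod>k\<in>A. 1 / f k)" for f :: "nat \<Rightarrow> real"
  by (simp add: prod_dividef)


lemma odd_sq_ge: "k \<ge> 1 \<Longrightarrow> (real k)\<^sup>2 \<le> (2 * real k - 1)\<^sup>2"
  by (intro power_mono) auto

lemma Ca_bound: "k \<ge> 1 \<Longrightarrow> 2 * (4 / (pi\<^sup>2 * (2 * real k - 1)\<^sup>2)) \<le> 8 / (pi\<^sup>2 * (real k)\<^sup>2)"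
proof -
  assume k: "k \<ge> 1"
  have le: "pi\<^sup>2 * (real k)\<^sup>2 \<le> pi\<^sup>2 * (2 * real k - 1)\<^sup>2" using odd_sq_ge[OF k] by simp
  have p1: "0 < pi\<^sup>2 * (real k)\<^sup>2" using k by simp
  have p2: "0 < pi\<^sup>2 * (2 * real k - 1)\<^sup>2" using k by simp
  have "8 / (pi\<^sup>2 * (2 * real k - 1)\<^sup>2) \<le> 8 / (pi\<^sup>2 * (real k)\<^sup>2)"
    using divide_left_mono[OF le, of 8] mult_pos_pos[OF p2 p1] by simp
  then show ?thesis by simp
qed

lemma phiS_lim: "(\<lambda>n. 1 / Sp n t) \<longlonglongrightarrow> phi_S t"
proof (cases "t = 0")
  case True then show ?thesis by (simp add: phi_S_def)
next
  case False
  have "(\<lambda>n. 1 / Sp n t) \<longlonglongrightarrow> 1 / (sinh t / t)"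
    by (rule tendsto_divide[OF tendsto_const Sp_lim[OF False]]) (use False in simp)
  then show ?thesis using False by (simp add: phi_S_def)
qed

lemma good_phi_S: "good phi_S (1/3)"
proof (rule good_prod_limit[where g="\<lambda>k t. 1 / (1 + t\<^sup>2 / (pi\<^sup>2 * (real k)\<^sup>2))"
      and b="\<lambda>k. 2 * (1 / (pi\<^sup>2 * (real k)\<^sup>2))"])
  show "good (\<lambda>t. 1 / (1 + t\<^sup>2 / (pi\<^sup>2 * (real k)\<^sup>2))) (2 * (1 / (pi\<^sup>2 * (real k)\<^sup>2)))" for k
    using good_lap2[of "1 / (pi\<^sup>2 * (real k)\<^sup>2)"] by simp
  show "(\<Sum>k=1..n. 2 * (1 / (pi\<^sup>2 * (real k)\<^sup>2))) \<le> 1/3" for n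
    using sum_bound_gen[of "\<lambda>k. 2 * (1 / (pi\<^sup>2 * (real k)\<^sup>2))" 2 n] by simp
  show "(\<lambda>n. \<Prod>k=1..n. 1 / (1 + t\<^sup>2 / (pi\<^sup>2 * (real k)\<^sup>2))) \<longlonglongrightarrow> phi_S t" for t
    using phiS_lim[of t] unfolding Sp_def inv_prod .
qed

lemma phiC_lim: "(\<lambda>n. 1 / Cp n t) \<longlonglongrightarrow> phi_C t"
  unfolding phi_C_def by (rule tendsto_divide[OF tendsto_const cosh_prod]) simp

lemma good_phi_C: "good phi_C 2"
proof (rule good_prod_limit[where g="\<lambda>k t. 1 / (1 + 4 * t\<^sup>2 / (pi\<^sup>2 * (2 * real k - 1)\<^sup>2))"
      and b="\<lambda>k. 2 * (4 / (pi\<^sup>2 * (2 * real k - 1)\<^sup>2))"])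
  show "good (\<lambda>t. 1 / (1 + 4 * t\<^sup>2 / (pi\<^sup>2 * (2 * real k - 1)\<^sup>2))) (2 * (4 / (pi\<^sup>2 * (2 * real k - 1)\<^sup>2)))" for k
    using good_lap2[of "4 / (pi\<^sup>2 * (2 * real k - 1)\<^sup>2)"] by simp
  show "(\<Sum>k=1..n. 2 * (4 / (pi\<^sup>2 * (2 * real k - 1)\<^sup>2))) \<le> 2" for n
    using sum_bound_gen[of "\<lambda>k. 2 * (4 / (pi\<^sup>2 * (2 * real k - 1)\<^sup>2))" 8 n] Ca_bound by simp
  show "(\<lambda>n. \<Prod>k=1..n. 1 / (1 + 4 * t\<^sup>2 / (pi\<^sup>2 * (2 * real k - 1)\<^sup>2))) \<longlonglongrightarrow> phi_C t" for t
    using phiC_lim[of t] unfolding Cp_def inv_prod .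
qed

lemma mixeq:
  assumes "0 < (a::real)" "0 \<le> x"
  shows "(1 + b * x) / (1 + a * x) = (1 - (1 - b / a)) + (1 - b / a) * (1 / (1 + a * x))"
proof -
  have p: "0 < 1 + a * x" using assms by (intro add_pos_nonneg) auto
  define R where "R = (1 - (1 - b / a)) + (1 - b / a) * (1 / (1 + a * x))"
  have "R * (1 + a * x) = b / a * (1 + a * x) + (1 - b / a)"
    unfolding R_def using p by (simp add: distrib_right)
  also have "\<dots> = 1 + b * x" using assms by (simp add: field_simps)
  finally have e: "R * (1 + a * x) = 1 + b * x" .
  have "(1 + b * x) / (1 + a * x) = R * (1 + a * x) / (1 + a * x)" using e by simp
  also have "\<dots> = R" using p by simp
  finally show ?thesis unfolding R_def .
qed

lemma good_ratio:
  assumes ab: "\<And>k. k \<ge> 1 \<Longrightarrow> 0 < a k \<and> 0 \<le> b k \<and> b k \<le> a k"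
    and bound: "\<And>n. (\<Sum>k=1..n. 2 * a k) \<le> B"
    and lim: "\<And>t. (\<lambda>n. \<Prod>k=1..n. (1 + b k * t\<^sup>2) / (1 + a k * t\<^sup>2)) \<longlonglongrightarrow> f t"
  shows "good f B"
proof (rule good_prod_limit[OF _ bound lim])
  fix n k assume "k \<in> {1..(n::nat)}"
  then have k: "0 < a k" "0 \<le> b k" "b k \<le> a k" using ab by auto
  have q: "0 \<le> 1 - b k / a k" "1 - b k / a k \<le> 1" using k by (auto simp: field_simps)
  have "(\<lambda>t. (1 + b k * t\<^sup>2) / (1 + a k * t\<^sup>2)) =
      (\<lambda>t. (1 - (1 - b k / a k)) + (1 - b k / a k) * (1 / (1 + a k * t\<^sup>2)))"
    using k by (intro ext mixeq) auto
  then show "good (\<lambda>t. (1 + b k * t\<^sup>2) / (1 + a k * t\<^sup>2)) (2 * a k)"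
    using good_lapmix[of "a k" "1 - b k / a k"] k q by simp
qed

lemma Sp_alt: "Sp n t = (\<Prod>k=1..n. 1 + (1 / (pi\<^sup>2 * (real k)\<^sup>2)) * t\<^sup>2)"
  unfolding Sp_def by (intro prod.cong) auto

lemma Sp_alt_c: "Sp n (c * t) = (\<Prod>k=1..n. 1 + (c\<^sup>2 / (pi\<^sup>2 * (real k)\<^sup>2)) * t\<^sup>2)"
  unfolding Sp_def by (intro prod.cong) (auto simp: power_mult_distrib)

lemma Cp_alt: "Cp n t = (\<Prod>k=1..n. 1 + (4 / (pi\<^sup>2 * (2 * real k - 1)\<^sup>2)) * t\<^sup>2)"
  unfolding Cp_def by (intro prod.cong) auto

lemma Cp_alt_c: "Cp n (c * t) = (\<Prod>k=1..n. 1 + (4 * c\<^sup>2 / (pi\<^sup>2 * (2 * real k - 1)\<^sup>2)) * t\<^sup>2)"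
  unfolding Cp_def by (intro prod.cong) (auto simp: power_mult_distrib)

lemma prod_ratio: "(\<Prod>k\<in>A. f k) / (\<Prod>k\<in>A. g k) = (\<Prod>k\<in>A. f k / g k)" for f g :: "nat \<Rightarrow> real"
  by (simp add: prod_dividef)

lemma phi_S_pos: "0 < phi_S t"
  by (cases "t = 0") (auto simp: phi_S_def intro: sdivsinh_pos)

lemma good_rho_S:
  assumes c: "0 < c" "c < 1"
  shows "good (\<lambda>t. phi_S t / phi_S (c * t)) (1/3)"
proof (rule good_ratio[where a="\<lambda>k. 1 / (pi\<^sup>2 * (real k)\<^sup>2)" and b="\<lambda>k. c\<^sup>2 / (pi\<^sup>2 * (real k)\<^sup>2)"])
  show "0 < 1 / (pi\<^sup>2 * (real k)\<^sup>2) \<and> 0 \<le> c\<^sup>2 / (pi\<^sup>2 * (real k)\<^sup>2) \<and> c\<^sup>2 / (pi\<^sup>2 * (real k)\<^sup>2) \<le> 1 / (pi\<^sup>2 * (real k)\<^sup>2)"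
    if "k \<ge> 1" for k
  proof -
    have "c\<^sup>2 \<le> 1" using c by (simp add: power_le_one)
    then show ?thesis using that by (auto intro: divide_right_mono)
  qed
  show "(\<Sum>k=1..n. 2 * (1 / (pi\<^sup>2 * (real k)\<^sup>2))) \<le> 1/3" for n
    using sum_bound_gen[of "\<lambda>k. 2 * (1 / (pi\<^sup>2 * (real k)\<^sup>2))" 2 n] by simp
  fix t
  have "(\<lambda>n. Sp n (c * t) / Sp n t) \<longlonglongrightarrow> phi_S t / phi_S (c * t)"
  proof (cases "t = 0")
    case True then show ?thesis by (simp add: phi_S_def)
  next
    case False
    then have ct: "c * t \<noteq> 0" using c by simp
    have "(\<lambda>n. Sp n (c * t) / Sp n t) \<longlonglongrightarrow> (sinh (c * t) / (c * t)) / (sinh t / t)"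
      by (rule tendsto_divide[OF Sp_lim[OF ct] Sp_lim[OF False]]) (use False in simp)
    moreover have "(sinh (c * t) / (c * t)) / (sinh t / t) = phi_S t / phi_S (c * t)"
      using False ct by (simp add: phi_S_def)
    ultimately show ?thesis by simp
  qed
  then show "(\<lambda>n. \<Prod>k=1..n. (1 + c\<^sup>2 / (pi\<^sup>2 * (real k)\<^sup>2) * t\<^sup>2) / (1 + 1 / (pi\<^sup>2 * (real k)\<^sup>2) * t\<^sup>2))
      \<longlonglongrightarrow> phi_S t / phi_S (c * t)"
    unfolding Sp_alt_c Sp_alt[of _ t] prod_ratio .
qed

lemma good_rho_C:
  assumes c: "0 < c" "c < 1"
  shows "good (\<lambda>t. phi_C t / phi_C (c * t)) 2"
proof (rule good_ratio[where a="\<lambda>k. 4 / (pi\<^sup>2 * (2 * real k - 1)\<^sup>2)" and b="\<lambda>k. 4 * c\<^sup>2 / (pi\<^sup>2 * (2 * real k - 1)\<^sup>2)"])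
  show "0 < 4 / (pi\<^sup>2 * (2 * real k - 1)\<^sup>2) \<and> 0 \<le> 4 * c\<^sup>2 / (pi\<^sup>2 * (2 * real k - 1)\<^sup>2)
      \<and> 4 * c\<^sup>2 / (pi\<^sup>2 * (2 * real k - 1)\<^sup>2) \<le> 4 / (pi\<^sup>2 * (2 * real k - 1)\<^sup>2)"
    if "k \<ge> 1" for k
  proof -
    have "c\<^sup>2 \<le> 1" using c by (simp add: power_le_one)
    moreover have "2 * real k - 1 \<noteq> 0" using that by linarith
    ultimately show ?thesis using that by (auto intro: divide_right_mono)
  qed
  show "(\<Sum>k=1..n. 2 * (4 / (pi\<^sup>2 * (2 * real k - 1)\<^sup>2))) \<le> 2" for n
    using sum_bound_gen[of "\<lambda>k. 2 * (4 / (pi\<^sup>2 * (2 * real k - 1)\<^sup>2))" 8 n] Ca_bound by simp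
  fix t
  have "(\<lambda>n. Cp n (c * t) / Cp n t) \<longlonglongrightarrow> cosh (c * t) / cosh t"
    by (rule tendsto_divide[OF cosh_prod cosh_prod]) simp
  moreover have "cosh (c * t) / cosh t = phi_C t / phi_C (c * t)" by (simp add: phi_C_def)
  ultimately show "(\<lambda>n. \<Prod>k=1..n. (1 + 4 * c\<^sup>2 / (pi\<^sup>2 * (2 * real k - 1)\<^sup>2) * t\<^sup>2) / (1 + 4 / (pi\<^sup>2 * (2 * real k - 1)\<^sup>2) * t\<^sup>2))
      \<longlonglongrightarrow> phi_C t / phi_C (c * t)"
    unfolding Cp_alt_c Cp_alt[of _ t] prod_ratio by simp
qed

lemma good_phi_T: "good phi_T 2"
proof (rule good_ratio[where a="\<lambda>k. 4 / (pi\<^sup>2 * (2 * real k - 1)\<^sup>2)" and b="\<lambda>k. 1 / (pi\<^sup>2 * (real k)\<^sup>2)"])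
  show "0 < 4 / (pi\<^sup>2 * (2 * real k - 1)\<^sup>2) \<and> 0 \<le> 1 / (pi\<^sup>2 * (real k)\<^sup>2)
      \<and> 1 / (pi\<^sup>2 * (real k)\<^sup>2) \<le> 4 / (pi\<^sup>2 * (2 * real k - 1)\<^sup>2)"
    if k: "k \<ge> 1" for k
  proof -
    have nz: "2 * real k - 1 \<noteq> 0" using k by linarith
    have "(2 * real k - 1)\<^sup>2 \<le> (2 * real k)\<^sup>2" using k by (intro power_mono) auto
    then have "pi\<^sup>2 * (2 * real k - 1)\<^sup>2 \<le> 4 * (pi\<^sup>2 * (real k)\<^sup>2)"
      by (simp add: power_mult_distrib)
    note le = this
    have p1: "0 < pi\<^sup>2 * (2 * real k - 1)\<^sup>2" "0 < 4 * (pi\<^sup>2 * (real k)\<^sup>2)" using nz k by auto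
    have "4 / (4 * (pi\<^sup>2 * (real k)\<^sup>2)) \<le> 4 / (pi\<^sup>2 * (2 * real k - 1)\<^sup>2)"
      using divide_left_mono[OF le, of 4] mult_pos_pos[OF p1(2) p1(1)] by simp
    then have "1 / (pi\<^sup>2 * (real k)\<^sup>2) \<le> 4 / (pi\<^sup>2 * (2 * real k - 1)\<^sup>2)" by simp
    then show ?thesis using nz k by auto
  qed
  show "(\<Sum>k=1..n. 2 * (4 / (pi\<^sup>2 * (2 * real k - 1)\<^sup>2))) \<le> 2" for n
    using sum_bound_gen[of "\<lambda>k. 2 * (4 / (pi\<^sup>2 * (2 * real k - 1)\<^sup>2))" 8 n] Ca_bound by simp
  fix t
  have "(\<lambda>n. Sp n t / Cp n t) \<longlonglongrightarrow> phi_T t"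
  proof (cases "t = 0")
    case True then show ?thesis by (simp add: phi_T_def)
  next
    case False
    have "(\<lambda>n. Sp n t / Cp n t) \<longlonglongrightarrow> (sinh t / t) / cosh t"
      by (rule tendsto_divide[OF Sp_lim[OF False] cosh_prod]) simp
    moreover have "(sinh t / t) / cosh t = phi_T t" using False by (simp add: phi_T_def tanh_def)
    ultimately show ?thesis by simp
  qed
  then show "(\<lambda>n. \<Prod>k=1..n. (1 + 1 / (pi\<^sup>2 * (real k)\<^sup>2) * t\<^sup>2) / (1 + 4 / (pi\<^sup>2 * (2 * real k - 1)\<^sup>2) * t\<^sup>2))
      \<longlonglongrightarrow> phi_T t"
    unfolding Sp_alt[of _ t] Cp_alt[of _ t] prod_ratio .
qed

definition XS :: "real \<Rightarrow> real" where
  "XS t = - (\<Sum>n. t * dS n t)"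

lemma dS_summable: "summable (\<lambda>n. t * dS n t)"
proof -
  have "summable (\<lambda>n. 2 * (\<bar>t\<bar> + 1) * (1 / (real n + 1)\<^sup>2))"
    by (intro summable_mult inv_sq_summable)
  then have "summable (\<lambda>n. dS n t)"
    by (rule summable_comparison_test'[where N=0]) (intro dS_bound, simp)
  then show ?thesis by (rule summable_mult)
qed

lemma bdcf_S_XS: "bdcf phi_S t = exp (XS t)"
  unfolding XS_def by (rule bdcf_S_series)

lemma good_psiT:
  assumes "0 \<le> s"
  shows "good (\<lambda>t. exp (s * (phi_S (2 * t) - 1))) (s * (4 / 3))"
proof -
  have "good (\<lambda>t. phi_S (2 * t)) (2\<^sup>2 * (1/3))" by (rule good_scale[OF good_phi_S])
  from good_poisson[OF this assms] show ?thesis by simp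
qed

lemma psiS_term:
  "2 * s * (1 / (1 + (1 / (pi\<^sup>2 * (real k + 1)\<^sup>2)) * t\<^sup>2) - 1) = - s * (t * dS k t)"
proof -
  define A where "A = pi\<^sup>2 * (real k + 1)\<^sup>2"
  have A: "0 < A" unfolding A_def by simp
  have B: "0 < A + t\<^sup>2" using A by (intro add_pos_nonneg) auto
  have e: "1 / (1 + (1 / A) * t\<^sup>2) = A / (A + t\<^sup>2)" using A by (simp add: field_simps)
  have "2 * s * (A / (A + t\<^sup>2) - 1) = - s * (2 * t\<^sup>2 / (A + t\<^sup>2))"
    using B by (simp add: field_simps)
  then have "2 * s * (1 / (1 + (1 / A) * t\<^sup>2) - 1) = - s * (2 * t\<^sup>2 / (A + t\<^sup>2))"
    unfolding e .
  then show ?thesis unfolding A_def dS_def by (simp add: power2_eq_square mult.assoc)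
qed

lemma good_psiS:
  assumes s: "0 \<le> s"
  shows "good (\<lambda>t. exp (s * XS t)) s"
proof (rule good_limit[where fs="\<lambda>n t. \<Prod>k<n. exp (2 * s * (1 / (1 + (1 / (pi\<^sup>2 * (real k + 1)\<^sup>2)) * t\<^sup>2) - 1))"])
  fix n
  have "good (\<lambda>t. \<Prod>k<n. exp (2 * s * (1 / (1 + (1 / (pi\<^sup>2 * (real k + 1)\<^sup>2)) * t\<^sup>2) - 1)))
      (\<Sum>k<n. 2 * s * (2 * (1 / (pi\<^sup>2 * (real k + 1)\<^sup>2))))"
    by (intro good_prod good_poisson good_lap2) (use s in auto)
  moreover have "(\<Sum>k<n. 2 * s * (2 * (1 / (pi\<^sup>2 * (real k + 1)\<^sup>2)))) \<le> s"
  proof -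
    have "(\<Sum>k<n. 2 * s * (2 * (1 / (pi\<^sup>2 * (real k + 1)\<^sup>2)))) = (4 * s / pi\<^sup>2) * (\<Sum>k<n. 1 / (real k + 1)\<^sup>2)"
      by (simp add: sum_distrib_left field_simps)
    also have "\<dots> \<le> (4 * s / pi\<^sup>2) * (pi\<^sup>2 / 6)"
      using sum_le_suminf[OF inv_sq_summable, of "{..<n}"] inv_sq_sums s
      by (intro mult_left_mono) (auto simp: sums_iff)
    also have "\<dots> \<le> s" using s by simp
    finally show ?thesis .
  qed
  ultimately show "good (\<lambda>t. \<Prod>k<n. exp (2 * s * (1 / (1 + (1 / (pi\<^sup>2 * (real k + 1)\<^sup>2)) * t\<^sup>2) - 1))) s"
    by (rule good_mono)
next
  fix t
  have eq: "(\<Prod>k<n. exp (2 * s * (1 / (1 + (1 / (pi\<^sup>2 * (real k + 1)\<^sup>2)) * t\<^sup>2) - 1)))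
      = exp (- s * (\<Sum>k<n. t * dS k t))" for n
  proof -
    have "(\<Prod>k<n. exp (2 * s * (1 / (1 + (1 / (pi\<^sup>2 * (real k + 1)\<^sup>2)) * t\<^sup>2) - 1)))
        = exp (\<Sum>k<n. 2 * s * (1 / (1 + (1 / (pi\<^sup>2 * (real k + 1)\<^sup>2)) * t\<^sup>2) - 1))"
      by (rule exp_sum[symmetric]) simp
    also have "(\<Sum>k<n. 2 * s * (1 / (1 + (1 / (pi\<^sup>2 * (real k + 1)\<^sup>2)) * t\<^sup>2) - 1))
        = (\<Sum>k<n. - s * (t * dS k t))"
      by (rule sum.cong[OF refl psiS_term])
    also have "\<dots> = - s * (\<Sum>k<n. t * dS k t)" by (rule sum_distrib_left[symmetric])
    finally show ?thesis .
  qed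
  have "(\<lambda>n. \<Sum>k<n. t * dS k t) \<longlonglongrightarrow> (\<Sum>k. t * dS k t)"
    using dS_summable[of t] by (simp add: summable_LIMSEQ)
  then have "(\<lambda>n. exp (- s * (\<Sum>k<n. t * dS k t))) \<longlonglongrightarrow> exp (- s * (\<Sum>k. t * dS k t))"
    by (intro tendsto_intros)
  then show "(\<lambda>n. \<Prod>k<n. exp (2 * s * (1 / (1 + (1 / (pi\<^sup>2 * (real k + 1)\<^sup>2)) * t\<^sup>2) - 1))) \<longlonglongrightarrow> exp (s * XS t)"
    unfolding eq XS_def by simp
qed

lemma bdcf_C_prod: "bdcf phi_C t = bdcf phi_S t * bdcf phi_T t"
proof (cases "t = 0")
  case True then show ?thesis by (simp add: bdcf_def)
next
  case False
  have sh: "sinh t \<noteq> 0" using False by simp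
  have ch: "cosh t \<noteq> 0" using cosh_real_pos[of t] by linarith
  have key: "cosh t * cosh t = sinh t * sinh t + 1" using cosh_square_eq[of t] by (simp add: power2_eq_square)
  have "- t * tanh t = (1 - t * (cosh t / sinh t)) + ((1 / cosh t) * (t / sinh t) - 1)"
  proof -
    have "(1 - t * (cosh t / sinh t)) + ((1 / cosh t) * (t / sinh t) - 1) = t * (1 - cosh t * cosh t) / (sinh t * cosh t)"
      using sh ch by (simp add: field_simps)
    also have "\<dots> = - t * (sinh t * sinh t) / (sinh t * cosh t)" by (simp add: key)
    also have "\<dots> = - t * tanh t" using sh ch by (simp add: tanh_def)
    finally show ?thesis by simp
  qed
  then show ?thesis using False by (simp add: bdcf_C bdcf_S bdcf_T exp_add[symmetric])
qed

lemma setint: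
  assumes "continuous_on {a..b} k"
  shows "integrable lborel (\<lambda>u. indicator {a..b} u * k u)"
    "(\<integral>u. indicator {a..b} u * k u \<partial>lborel) = integral {a..b} (k :: real \<Rightarrow> real)"
proof -
  have si: "set_integrable lborel {a..b} k" by (rule borel_integrable_atLeastAtMost'[OF assms])
  then show "integrable lborel (\<lambda>u. indicator {a..b} u * k u)" by (simp add: set_integrable_def)
  from set_borel_integral_eq_integral(2)[OF si]
  show "(\<integral>u. indicator {a..b} u * k u \<partial>lborel) = integral {a..b} k"
    by (simp add: set_lebesgue_integral_def)
qed

lemma isCont_phi_S: "isCont phi_S x"
proof -
  obtain M where M: "real_distribution M" "char M = (\<lambda>t. complex_of_real (phi_S t))"
    using good_phi_S unfolding good_def by blast
  have "phi_S = (\<lambda>x. Re (char M x))" using M(2) by simp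
  moreover have "isCont (\<lambda>x. Re (char M x)) x"
    using real_distribution.isCont_char[OF M(1)] by simp
  ultimately show ?thesis by simp
qed

lemma LT_deriv:
  assumes t: "t \<noteq> 0"
  shows "\<exists>D. ((\<lambda>s. ln (sinh s / (s * cosh s))) has_real_derivative D) (at t) \<and> t * D = phi_S (2 * t) - 1"
proof -
  have sh: "sinh t \<noteq> 0" using t by simp
  have ch: "cosh t \<noteq> 0" using cosh_real_pos[of t] by linarith
  have "((\<lambda>s. ln (sinh s / (s * cosh s))) has_real_derivative
      ((cosh t * (t * cosh t) - sinh t * (1 * cosh t + t * sinh t)) / (t * cosh t)\<^sup>2) / (sinh t / (t * cosh t))) (at t)"
    using tanhdiv_pos[OF t] t ch by (auto intro!: derivative_eq_intros simp: power2_eq_square ac_simps)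
  moreover have "t * (((cosh t * (t * cosh t) - sinh t * (1 * cosh t + t * sinh t)) / (t * cosh t)\<^sup>2) / (sinh t / (t * cosh t)))
      = (1 / cosh t) * (t / sinh t) - 1"
  proof -
    have c2: "(cosh t)\<^sup>2 = (sinh t)\<^sup>2 + 1" by (rule cosh_square_eq)
    have key: "cosh t * cosh t = sinh t * sinh t + 1" using c2 by (simp add: power2_eq_square)
    have e1: "cosh t * (t * cosh t) - sinh t * (1 * cosh t + t * sinh t) = t - sinh t * cosh t"
      using key by (simp add: algebra_simps)
    show ?thesis unfolding e1 using t sh ch
      by (simp add: field_simps power2_eq_square)
  qed
  moreover have "(1 / cosh t) * (t / sinh t) = phi_S (2 * t)"
    using t sinh_double[of t] by (simp add: field_simps phi_S_def)
  ultimately show ?thesis by auto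
qed

lemma phi_T_pos: "0 < phi_T s"
proof (cases "s = 0")
  case True then show ?thesis by (simp add: phi_T_def)
next
  case False
  have "tanh s / s = sinh s / (s * cosh s)" by (simp add: tanh_def divide_divide_eq_left mult.commute)
  then show ?thesis using tanhdiv_pos[OF False] False by (simp add: phi_T_def)
qed

lemma ln_phi_T_integral:
  assumes t: "t \<noteq> 0" and c: "0 < c" "c \<le> 1"
  shows "((\<lambda>u. (phi_S (2 * (u * t)) - 1) / u) has_integral (ln (phi_T t) - ln (phi_T (c * t)))) {c..1}"
proof -
  let ?F = "\<lambda>u. ln (phi_T (u * t))"
  have "((\<lambda>u. (phi_S (2 * (u * t)) - 1) / u) has_integral (?F 1 - ?F c)) {c..1}"
  proof (rule fundamental_theorem_of_calculus[OF c(2)])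
    fix x assume x: "x \<in> {c..1}"
    then have x0: "x \<noteq> 0" "0 < x" using c by auto
    then have xt: "x * t \<noteq> 0" using t by simp
    obtain D where D: "((\<lambda>s. ln (sinh s / (s * cosh s))) has_real_derivative D) (at (x * t))"
        "(x * t) * D = phi_S (2 * (x * t)) - 1" using LT_deriv[OF xt] by blast
    have "((\<lambda>u. ln (sinh (u * t) / ((u * t) * cosh (u * t)))) has_real_derivative D * t) (at x)"
    proof -
      have dg: "((\<lambda>u. u * t) has_real_derivative t) (at x)" by (auto intro!: derivative_eq_intros)
      show ?thesis
        using DERIV_chain2[where f="\<lambda>s. ln (sinh s / (s * cosh s))" and g="\<lambda>u. u * t" and x=x and Da=D and Db=t and s=UNIV, OF D(1) dg]
        by simp
    qed
    then have "(?F has_real_derivative D * t) (at x)"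
    proof (rule has_field_derivative_transform_within_open[of _ _ _ "-{0}"])
      fix u :: real assume "u \<in> -{0}"
      then have "u * t \<noteq> 0" using t by simp
      then show "ln (sinh (u * t) / ((u * t) * cosh (u * t))) = ln (phi_T (u * t))"
        by (simp add: phi_T_def tanh_def mult.commute)
    qed (use x0 in auto)
    moreover have "D * t = (phi_S (2 * (x * t)) - 1) / x"
      using D(2) x0 by (simp add: field_simps)
    ultimately have "(?F has_real_derivative (phi_S (2 * (x * t)) - 1) / x) (at x)" by simp
    then show "(?F has_vector_derivative (phi_S (2 * (x * t)) - 1) / x) (at x within {c..1})"
      by (simp add: has_real_derivative_iff_has_vector_derivative has_vector_derivative_at_within)
  qed
  then show ?thesis by simp
qed

lemma inv_integral:
  assumes c: "0 < (c::real)" "c \<le> 1"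
  shows "((\<lambda>u. 1 / u) has_integral (- ln c)) {c..1}"
proof -
  have "((\<lambda>u. 1 / u) has_integral (ln 1 - ln c)) {c..1}"
  proof (rule fundamental_theorem_of_calculus[OF c(2)])
    fix x assume x: "x \<in> {c..(1::real)}"
    then have "0 < x" using c by auto
    then have "(ln has_real_derivative 1 / x) (at x)" by (rule DERIV_ln_divide)
    then show "(ln has_vector_derivative 1 / x) (at x within {c..1})"
      by (simp add: has_real_derivative_iff_has_vector_derivative has_vector_derivative_at_within)
  qed
  then show ?thesis by simp
qed

lemma good_rho_T:
  assumes c: "0 < c" "c < 1"
  shows "\<exists>B. good (\<lambda>t. phi_T t / phi_T (c * t)) B"
proof -
  define l where "l = - ln c"
  have l: "0 < l" unfolding l_def using c by simp
  define w where "w u = indicator {c..1} u * (1 / (l * u))" for u :: real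
  have cont1: "continuous_on {c..1} (\<lambda>u::real. 1 / (l * u))"
    using c l by (intro continuous_intros) auto
  have wI: "integrable lborel w" and wint: "(\<integral>u. w u \<partial>lborel) = 1"
  proof -
    show "integrable lborel w" unfolding w_def by (rule setint(1)[OF cont1])
    have "((\<lambda>u. 1 / l * (1 / u)) has_integral (1 / l * (- ln c))) {c..1}"
      by (rule has_integral_mult_right[OF inv_integral]) (use c in auto)
    then have "((\<lambda>u. 1 / (l * u)) has_integral 1) {c..1}" using l unfolding l_def by simp
    then have "integral {c..1} (\<lambda>u. 1 / (l * u)) = 1" by (rule integral_unique)
    then show "(\<integral>u. w u \<partial>lborel) = 1" unfolding w_def setint(2)[OF cont1] .
  qed
  have wnn: "0 \<le> w u" for u unfolding w_def using c l by (auto simp: indicator_def)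
  have wm[measurable]: "w \<in> borel_measurable borel" using wI by (simp add: borel_measurable_integrable)
  let ?P = "density lborel w"
  have P: "prob_space ?P"
  proof
    have "emeasure ?P (space ?P) = (\<integral>\<^sup>+ u. ennreal (w u) \<partial>lborel)"
      by (simp add: emeasure_density)
    also have "\<dots> = ennreal (\<integral>u. w u \<partial>lborel)"
      by (rule nn_integral_eq_integral[OF wI]) (simp add: wnn)
    finally show "emeasure ?P (space ?P) = 1" by (simp add: wint)
  qed
  interpret P: prob_space ?P by (rule P)
  have cont2: "continuous_on {c..1} (\<lambda>u::real. 1 / (l * u) * (2 * u)\<^sup>2)"
    using c l by (intro continuous_intros) auto
  have hi: "integrable ?P (\<lambda>u. (2 * u)\<^sup>2)"
  proof (subst integrable_density)
    show "integrable lborel (\<lambda>u. w u *\<^sub>R (2 * u)\<^sup>2)"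
      using setint(1)[OF cont2] unfolding w_def by (simp add: mult.assoc)
  qed (auto simp: wnn)
  define B1 where "B1 = 1/3 * (\<integral>u. (2 * u)\<^sup>2 \<partial>?P)"
  have g1: "good (\<lambda>t. \<integral>u. phi_S (t * (2 * u)) \<partial>?P) B1"
    unfolding B1_def by (rule good_mixture[OF good_phi_S P _ hi]) simp
  have g2: "good (\<lambda>t. exp (l * ((\<integral>u. phi_S (t * (2 * u)) \<partial>?P) - 1))) (l * B1)"
    by (rule good_poisson[OF g1]) (use l in simp)
  have eq: "exp (l * ((\<integral>u. phi_S (t * (2 * u)) \<partial>?P) - 1)) = phi_T t / phi_T (c * t)" for t
  proof (cases "t = 0")
    case True
    have "P.prob UNIV = 1" using P.prob_space by simp
    then show ?thesis using True by (simp add: phi_S_def phi_T_def)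
  next
    case False
    have cphi: "continuous_on UNIV phi_S" by (simp add: continuous_at_imp_continuous_on isCont_phi_S)
    have phim[measurable]: "phi_S \<in> borel_measurable borel" by (rule borel_measurable_continuous_onI[OF cphi])
    have cont3: "continuous_on {c..1} (\<lambda>u. phi_S (t * (2 * u)) / (l * u))"
      using c l by (intro continuous_intros continuous_on_compose2[OF cphi]) auto
    have "(\<integral>u. phi_S (t * (2 * u)) \<partial>?P) = (\<integral>u. w u * phi_S (t * (2 * u)) \<partial>lborel)"
      by (subst integral_density) (auto simp: wnn)
    also have "\<dots> = (\<integral>u. indicator {c..1} u * (phi_S (t * (2 * u)) / (l * u)) \<partial>lborel)"
      unfolding w_def by (intro Bochner_Integration.integral_cong) auto
    also have "\<dots> = integral {c..1} (\<lambda>u. phi_S (t * (2 * u)) / (l * u))"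
      by (rule setint(2)[OF cont3])
    finally have chi: "(\<integral>u. phi_S (t * (2 * u)) \<partial>?P) = integral {c..1} (\<lambda>u. phi_S (t * (2 * u)) / (l * u))" .
    define D where "D = ln (phi_T t) - ln (phi_T (c * t))"
    have "((\<lambda>u. (phi_S (2 * (u * t)) - 1) / u + 1 / u) has_integral (D + l)) {c..1}"
      unfolding D_def l_def
      by (intro has_integral_add ln_phi_T_integral[OF False] inv_integral) (use c in auto)
    then have "((\<lambda>u. 1 / l * ((phi_S (2 * (u * t)) - 1) / u + 1 / u)) has_integral (1 / l * (D + l))) {c..1}"
      by (rule has_integral_mult_right)
    moreover have "(\<lambda>u. 1 / l * ((phi_S (2 * (u * t)) - 1) / u + 1 / u)) = (\<lambda>u. phi_S (t * (2 * u)) / (l * u))"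
      by (auto simp: field_simps diff_divide_distrib add_divide_distrib mult_ac)
    ultimately have "integral {c..1} (\<lambda>u. phi_S (t * (2 * u)) / (l * u)) = 1 / l * (D + l)"
      by (simp add: integral_unique)
    then have "l * ((\<integral>u. phi_S (t * (2 * u)) \<partial>?P) - 1) = D" using l chi by (simp add: field_simps)
    then show ?thesis unfolding D_def using phi_T_pos[of t] phi_T_pos[of "c * t"]
      by (simp add: exp_diff)
  qed
  show ?thesis using g2 unfolding eq by blast
qed

lemma good_char_fun: "good f B \<Longrightarrow> is_char_fun (\<lambda>t. complex_of_real (f t))"
  unfolding good_def is_char_fun_def by metis

lemma sd_from_good:
  assumes g: "good \<phi> B" and r: "\<And>c. 0 < c \<Longrightarrow> c < 1 \<Longrightarrow> \<exists>B. good (\<lambda>t. \<phi> t / \<phi> (c * t)) B"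
    and nz: "\<And>t. \<phi> t \<noteq> 0"
  shows "selfdecomposable (\<lambda>t. complex_of_real (\<phi> t))"
  unfolding selfdecomposable_def
proof (intro conjI allI impI)
  show "is_char_fun (\<lambda>t. complex_of_real (\<phi> t))" by (rule good_char_fun[OF g])
  fix c :: real assume "0 < c \<and> c < 1"
  then obtain B' where B': "good (\<lambda>t. \<phi> t / \<phi> (c * t)) B'" using r by blast
  show "\<exists>\<rho>. is_char_fun \<rho> \<and> (\<forall>t. complex_of_real (\<phi> t) = complex_of_real (\<phi> (c * t)) * \<rho> t)"
  proof (intro exI conjI allI)
    show "is_char_fun (\<lambda>t. complex_of_real (\<phi> t / \<phi> (c * t)))" by (rule good_char_fun[OF B'])
    fix t
    show "complex_of_real (\<phi> t) = complex_of_real (\<phi> (c * t)) * complex_of_real (\<phi> t / \<phi> (c * t))"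
    proof -
      have "\<phi> t = \<phi> (c * t) * (\<phi> t / \<phi> (c * t))" using nz[of "c * t"] by simp
      then show ?thesis by (metis of_real_mult)
    qed
  qed
qed

lemma rd_return: "real_distribution (return borel (0::real))"
  unfolding real_distribution_def real_distribution_axioms_def by (auto intro: prob_space_return)

lemma conv_pow_facts:
  assumes N: "real_distribution N"
  shows "real_distribution (conv_pow N n) \<and> (\<forall>t. char (conv_pow N n) t = char N t ^ n)"
proof (induction n)
  case 0 then show ?case by (simp add: rd_return char_def integral_return)
next
  case (Suc n)
  then show ?case using conv_facts(1,2)[OF N, of "conv_pow N n"] by simp
qed

lemma abs_le_sq: "\<bar>x::real\<bar> \<le> 1 + x\<^sup>2"
proof (cases "\<bar>x\<bar> \<le> 1")
  case True then show ?thesis by (simp add: add_increasing2)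
next
  case False
  then have "\<bar>x\<bar> * 1 \<le> \<bar>x\<bar> * \<bar>x\<bar>" by (intro mult_left_mono) auto
  then show ?thesis by (simp add: power2_eq_square)
qed

lemma flm: "real_distribution M \<Longrightarrow> integrable M (\<lambda>x. x\<^sup>2) \<Longrightarrow> finite_log_moment M"
  unfolding finite_log_moment_def
proof -
  assume M: "real_distribution M" and i: "integrable M (\<lambda>x. x\<^sup>2)"
  interpret real_distribution M by fact
  have i2: "integrable M (\<lambda>x. 1 + x\<^sup>2)" using i by simp
  show "integrable M (\<lambda>x. ln (1 + \<bar>x\<bar>))"
  proof (rule Bochner_Integration.integrable_bound[OF i2])
    show "AE x in M. norm (ln (1 + \<bar>x\<bar>)) \<le> norm (1 + x\<^sup>2)"
    proof (intro AE_I2)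
      fix x :: real
      have "0 \<le> ln (1 + \<bar>x\<bar>)" by simp
      moreover have "ln (1 + \<bar>x\<bar>) \<le> \<bar>x\<bar>" by (rule ln_add_one_self_le_self) simp
      ultimately show "norm (ln (1 + \<bar>x\<bar>)) \<le> norm (1 + x\<^sup>2)"
        using abs_le_sq[of x] by (simp add: add_nonneg_nonneg)
    qed
  qed simp
qed

lemma bdcf_dist:
  assumes X: "\<And>t. bdcf \<phi> t = exp (X t)" and g: "\<And>s. 0 \<le> s \<Longrightarrow> \<exists>B. good (\<lambda>t. exp (s * X t)) B"
  shows "\<exists>M. real_distribution M \<and> char M = (\<lambda>t. complex_of_real (bdcf \<phi> t))
            \<and> infinitely_divisible M \<and> finite_log_moment M"
proof -
  obtain B where "good (\<lambda>t. exp (1 * X t)) B" using g[of 1] by auto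
  then obtain M where M: "real_distribution M" "char M = (\<lambda>t. complex_of_real (exp (X t)))"
      "integrable M (\<lambda>x. x\<^sup>2)" unfolding good_def by auto
  have chM: "char M = (\<lambda>t. complex_of_real (bdcf \<phi> t))" using M(2) X by simp
  have "infinitely_divisible M" unfolding infinitely_divisible_def
  proof (intro conjI allI impI)
    show "real_distribution M" by fact
    fix n :: nat assume n: "1 \<le> n"
    obtain B' where "good (\<lambda>t. exp ((1 / real n) * X t)) B'" using g[of "1 / real n"] by auto
    then obtain N where N: "real_distribution N" "char N = (\<lambda>t. complex_of_real (exp ((1 / real n) * X t)))"
      unfolding good_def by auto
    note cp = conv_pow_facts[OF N(1), of n]
    have "char (conv_pow N n) = char M"
    proof
      fix t
      have "char (conv_pow N n) t = complex_of_real (exp ((1 / real n) * X t)) ^ n" using cp N(2) by simp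
      also have "\<dots> = complex_of_real (exp ((1 / real n) * X t) ^ n)" by simp
      also have "exp ((1 / real n) * X t) ^ n = exp (real n * ((1 / real n) * X t))"
        by (rule exp_of_nat_mult[symmetric])
      also have "real n * ((1 / real n) * X t) = X t" using n by simp
      finally show "char (conv_pow N n) t = char M t" using M(2) by simp
    qed
    then have "M = conv_pow N n" using Levy_uniqueness[OF M(1)] cp by metis
    then show "\<exists>N. real_distribution N \<and> M = conv_pow N n" using N(1) by blast
  qed
  then show ?thesis using M(1) chM flm[OF M(1) M(3)] by blast
qed

lemma phi_C_pos: "0 < phi_C t" by (simp add: phi_C_def)

theorem corollary1:
  shows "selfdecomposable (\<lambda>t. complex_of_real (phi_C t))
       \<and> selfdecomposable (\<lambda>t. complex_of_real (phi_S t))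
       \<and> selfdecomposable (\<lambda>t. complex_of_real (phi_T t))
       \<and> (\<forall>t::real. t \<noteq> 0 \<longrightarrow>
            bdcf phi_C t = exp (- t * tanh t)
          \<and> bdcf phi_S t = exp (1 - t * (cosh t / sinh t))
          \<and> bdcf phi_T t = exp ((1 / cosh t) * (t / sinh t) - 1)
          \<and> bdcf phi_T t = exp (2 * t / sinh (2 * t) - 1))
       \<and> (\<forall>t::real. bdcf phi_C t = bdcf phi_S t * bdcf phi_T t)
       \<and> (\<forall>\<phi>\<in>{phi_C, phi_S, phi_T}. \<exists>M. real_distribution M
            \<and> char M = (\<lambda>t. complex_of_real (bdcf \<phi> t))
            \<and> infinitely_divisible M \<and> finite_log_moment M)"
proof (intro conjI allI impI ballI)
  show "selfdecomposable (\<lambda>t. complex_of_real (phi_C t))"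
  proof (rule sd_from_good[OF good_phi_C])
    fix c :: real assume "0 < c" "c < 1"
    then show "\<exists>B. good (\<lambda>t. phi_C t / phi_C (c * t)) B" using good_rho_C by blast
  next
    fix t show "phi_C t \<noteq> 0" using phi_C_pos[of t] by simp
  qed
  show "selfdecomposable (\<lambda>t. complex_of_real (phi_S t))"
  proof (rule sd_from_good[OF good_phi_S])
    fix c :: real assume "0 < c" "c < 1"
    then show "\<exists>B. good (\<lambda>t. phi_S t / phi_S (c * t)) B" using good_rho_S by blast
  next
    fix t show "phi_S t \<noteq> 0" using phi_S_pos[of t] by simp
  qed
  show "selfdecomposable (\<lambda>t. complex_of_real (phi_T t))"
  proof (rule sd_from_good[OF good_phi_T])
    fix c :: real assume "0 < c" "c < 1"
    then show "\<exists>B. good (\<lambda>t. phi_T t / phi_T (c * t)) B" using good_rho_T by blast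
  next
    fix t show "phi_T t \<noteq> 0" using phi_T_pos[of t] by simp
  qed
  fix t :: real
  show "bdcf phi_C t = exp (- t * tanh t)" by (rule bdcf_C)
  assume t: "t \<noteq> 0"
  show "bdcf phi_S t = exp (1 - t * (cosh t / sinh t))" by (rule bdcf_S[OF t])
  show "bdcf phi_T t = exp ((1 / cosh t) * (t / sinh t) - 1)" by (rule bdcf_T[OF t])
  show "bdcf phi_T t = exp (2 * t / sinh (2 * t) - 1)" using t by (simp add: bdcf_T2 phi_S_def)
next
  fix t :: real
  show "bdcf phi_C t = bdcf phi_S t * bdcf phi_T t" by (rule bdcf_C_prod)
next
  fix \<phi> assume "\<phi> \<in> {phi_C, phi_S, phi_T}"
  moreover have "\<exists>M. real_distribution M \<and> char M = (\<lambda>t. complex_of_real (bdcf phi_S t))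
            \<and> infinitely_divisible M \<and> finite_log_moment M"
    by (rule bdcf_dist[of _ XS]) (auto simp: bdcf_S_XS intro: good_psiS)
  moreover have "\<exists>M. real_distribution M \<and> char M = (\<lambda>t. complex_of_real (bdcf phi_T t))
            \<and> infinitely_divisible M \<and> finite_log_moment M"
    by (rule bdcf_dist[of _ "\<lambda>t. phi_S (2 * t) - 1"]) (auto simp: bdcf_T2 intro: good_psiT)
  moreover have "\<exists>M. real_distribution M \<and> char M = (\<lambda>t. complex_of_real (bdcf phi_C t))
            \<and> infinitely_divisible M \<and> finite_log_moment M"
  proof (rule bdcf_dist[of _ "\<lambda>t. XS t + (phi_S (2 * t) - 1)"])
    show "bdcf phi_C t = exp (XS t + (phi_S (2 * t) - 1))" for t
      by (simp add: bdcf_C_prod bdcf_S_XS bdcf_T2 exp_add)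
    fix s :: real assume s: "0 \<le> s"
    have "good (\<lambda>t. exp (s * XS t) * exp (s * (phi_S (2 * t) - 1))) (s + s * (4 / 3))"
      by (rule good_mult[OF good_psiS[OF s] good_psiT[OF s]])
    moreover have "(\<lambda>t. exp (s * XS t) * exp (s * (phi_S (2 * t) - 1))) = (\<lambda>t. exp (s * (XS t + (phi_S (2 * t) - 1))))"
      by (simp add: exp_add[symmetric] distrib_left)
    ultimately show "\<exists>B. good (\<lambda>t. exp (s * (XS t + (phi_S (2 * t) - 1)))) B" by auto
  qed
  ultimately show "\<exists>M. real_distribution M \<and> char M = (\<lambda>t. complex_of_real (bdcf \<phi> t))
            \<and> infinitely_divisible M \<and> finite_log_moment M" by auto
qed

end
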